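(* Let $q$ be a power of an odd prime, write $q-1=2^s r$ with $r$ odd, and let $c\in\mathbb{F}_q^*$. The functional graph of $f(X)=c(X^{q+1}-X^2)$ over $\mathbb{F}_{q^2}$ is isomorphic to $$\mathscr{Z}(q)\ \oplus\ \bigoplus_{d\mid r}\frac{\varphi(d)(q-1)}{2\,\mathrm{ord}_{3d}(4)}\times\big(Cyc(2\,\mathrm{ord}_{3d}(4)),\mathscr{T}(s)\big).$$
   Context: The functional graph of a map $f:\mathbb{F}_{q^2}\to\mathbb{F}_{q^2}$ is the directed graph with vertex set $\mathbb{F}_{q^2}$ and an edge $x\to f(x)$ for every $x$. $Cyc(n)$ is the directed cycle of length $n$. $\mathscr{T}(1)$ is the tree with two vertices $P_1,P$ and the edge $P_1\to P$ (root $P$); for $m\ge1$, $\mathscr{T}(m+1)$ is obtained from $\mathscr{T}(m)$ by attaching two new vertices, each with an edge directed to it, to every vertex of the last (top) level of $\mathscr{T}(m)$. $(Cyc(n),\mathscr{T}(m))$ is the graph obtained from $Cyc(n)$ by replacing each vertex of the cycle by a copy of $\mathscr{T}(m)$ whose root is that cycle vertex. $\mathscr{Z}(q)$ is the graph consisting of a vertex with a loop ($Cyc(1)$) to which $\frac{q-1}{2}$ copies of $\mathscr{T}(1)$ and $\frac{q-1}{2}$ copies of $\mathscr{T}(2)$ are attached, the root of each copy being identified with the fixed vertex. $\oplus$ denotes disjoint union and $k\times G$ denotes $k$ disjoint copies of $G$. $\varphi$ is Euler's totient function and $\mathrm{ord}_m(n)$ is the multiplicative order of $n$ modulo $m$.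 *)

theory Defs
  imports "HOL-Number_Theory.Number_Theory"
begin

text \<open>Functional graphs are represented as pairs (V, g) of a vertex set and the
  successor map (every vertex has exactly one outgoing edge x \<rightarrow> g x).\<close>

definition fg_iso :: "'a set \<times> ('a \<Rightarrow> 'a) \<Rightarrow> 'b set \<times> ('b \<Rightarrow> 'b) \<Rightarrow> bool" where
  "fg_iso G H \<longleftrightarrow> (\<exists>h. bij_betw h (fst G) (fst H) \<and>
      (\<forall>x\<in>fst G. h (snd G x) = snd H (h x)))"

text \<open>Tree T(m): root None; level k \<ge> 1 vertices are Some bs with length bs = k - 1.\<close>

definition tree_verts :: "nat \<Rightarrow> bool list option set" where
  "tree_verts m = insert None (Some ` {bs. length bs < m})"

fun tree_par :: "bool list option \<Rightarrow> bool list option" where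
  "tree_par None = None"
| "tree_par (Some []) = None"
| "tree_par (Some (b # bs)) = Some bs"

text \<open>(Cyc(n), T(m)): vertex (i, t), i < n cycle index, t a vertex of the tree copy at i.\<close>

definition cyc_tree_verts :: "nat \<Rightarrow> nat \<Rightarrow> (nat \<times> bool list option) set" where
  "cyc_tree_verts n m = {0..<n} \<times> tree_verts m"

fun cyc_tree_map :: "nat \<Rightarrow> nat \<times> bool list option \<Rightarrow> nat \<times> bool list option" where
  "cyc_tree_map n (i, None) = (Suc i mod n, None)"
| "cyc_tree_map n (i, Some v) = (i, tree_par (Some v))"

text \<open>Z(q): fixed vertex None; Some (False, j, bs) are the non-root vertices of the j-th
  copy of T(1), Some (True, j, bs) those of the j-th copy of T(2).\<close>

definition Z_verts :: "nat \<Rightarrow> (bool \<times> nat \<times> bool list) option set" where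
  "Z_verts q = insert None
     ({Some (False, j, bs) | j bs. j < (q - 1) div 2 \<and> length bs < 1} \<union>
      {Some (True, j, bs) | j bs. j < (q - 1) div 2 \<and> length bs < 2})"

fun Z_map :: "(bool \<times> nat \<times> bool list) option \<Rightarrow> (bool \<times> nat \<times> bool list) option" where
  "Z_map None = None"
| "Z_map (Some (k, j, [])) = None"
| "Z_map (Some (k, j, b # bs)) = Some (k, j, bs)"

definition cyc_len :: "nat \<Rightarrow> nat" where
  "cyc_len d = 2 * ord (3 * d) 4"

definition mult_d :: "nat \<Rightarrow> nat \<Rightarrow> nat" where
  "mult_d q d = totient d * (q - 1) div (2 * ord (3 * d) 4)"

text \<open>The target graph
  Z(q) \<oplus> \<Oplus>_{d | r} mult_d q d \<times> (Cyc(cyc_len d), T(s)).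
  Component vertices: Inr (d, j, x) is vertex x of the j-th copy for divisor d.\<close>

definition target_verts :: "nat \<Rightarrow> nat \<Rightarrow> nat \<Rightarrow>
    ((bool \<times> nat \<times> bool list) option + nat \<times> nat \<times> nat \<times> bool list option) set" where
  "target_verts q r s = Inl ` Z_verts q \<union>
     Inr ` {(d, j, x) | d j x. d dvd r \<and> j < mult_d q d \<and> x \<in> cyc_tree_verts (cyc_len d) s}"

fun target_map :: "(bool \<times> nat \<times> bool list) option + nat \<times> nat \<times> nat \<times> bool list option \<Rightarrow>
    (bool \<times> nat \<times> bool list) option + nat \<times> nat \<times> nat \<times> bool list option" where
  "target_map (Inl z) = Inl (Z_map z)"
| "target_map (Inr (d, j, x)) = Inr (d, j, cyc_tree_map (cyc_len d) x)"

end

theory Submission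
  imports Defs
begin

lemma fg_iso_direct:
  assumes "bij_betw h V W" "\<forall>x\<in>V. h (g x) = k (h x)"
  shows "fg_iso (V, g) (W, k)"
  using assms unfolding fg_iso_def by auto

lemma fg_iso_inv:
  assumes "bij_betw h W V" "\<forall>w\<in>W. k w \<in> W" "\<forall>w\<in>W. h (k w) = g (h w)"
  shows "fg_iso (V, g) (W, k)"
proof -
  let ?h = "inv_into W h"
  have b: "bij_betw ?h V W" using assms(1) by (rule bij_betw_inv_into)
  have "\<forall>x\<in>V. ?h (g x) = k (?h x)"
  proof
    fix x assume "x \<in> V"
    then obtain w where w: "w \<in> W" "x = h w" using assms(1) by (auto simp: bij_betw_def)
    have "?h x = w" using w assms(1) by (simp add: bij_betw_def)
    moreover have "?h (g x) = k w"
      using w assms by (metis bij_betw_def inv_into_f_f)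
    ultimately show "?h (g x) = k (?h x)" by simp
  qed
  with b show ?thesis by (rule fg_iso_direct)
qed

lemma fg_iso_trans:
  assumes "fg_iso G H" "fg_iso H J" shows "fg_iso G J"
proof -
  obtain h1 where h1: "bij_betw h1 (fst G) (fst H)" "\<forall>x\<in>fst G. h1 (snd G x) = snd H (h1 x)"
    using assms(1) unfolding fg_iso_def by blast
  obtain h2 where h2: "bij_betw h2 (fst H) (fst J)" "\<forall>x\<in>fst H. h2 (snd H x) = snd J (h2 x)"
    using assms(2) unfolding fg_iso_def by blast
  have "bij_betw (h2 \<circ> h1) (fst G) (fst J)" using h1 h2 by (metis bij_betw_trans)
  moreover have "\<forall>x\<in>fst G. (h2 \<circ> h1) (snd G x) = snd J ((h2 \<circ> h1) x)"
    using h1 h2 by (auto simp: bij_betw_def)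
  ultimately show ?thesis unfolding fg_iso_def by blast
qed

lemma fg_iso_cong:
  assumes "fg_iso (V, g) (W, k)" "\<forall>x\<in>V. g x = g' x" "\<forall>w\<in>W. k w = k' w"
  shows "fg_iso (V, g') (W, k')"
proof -
  obtain h where h: "bij_betw h V W" "\<forall>x\<in>V. h (g x) = k (h x)"
    using assms(1) unfolding fg_iso_def by auto
  have "\<forall>x\<in>V. h (g' x) = k' (h x)" using h assms(2,3) by (auto simp: bij_betw_def)
  with h(1) show ?thesis by (rule fg_iso_direct)
qed

lemma fg_iso_sum:
  assumes "V1 \<inter> V2 = {}" "V = V1 \<union> V2"
    and "\<forall>x\<in>V1. g x \<in> V1" "\<forall>x\<in>V2. g x \<in> V2"
    and "fg_iso (V1, g) (W1, k1)" "fg_iso (V2, g) (W2, k2)"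
    and "\<forall>w. k (Inl w) = Inl (k1 w)" "\<forall>w. k (Inr w) = Inr (k2 w)"
  shows "fg_iso (V, g) (Inl ` W1 \<union> Inr ` W2, k)"
proof -
  obtain h1 where h1: "bij_betw h1 V1 W1" "\<forall>x\<in>V1. h1 (g x) = k1 (h1 x)"
    using assms(5) unfolding fg_iso_def by auto
  obtain h2 where h2: "bij_betw h2 V2 W2" "\<forall>x\<in>V2. h2 (g x) = k2 (h2 x)"
    using assms(6) unfolding fg_iso_def by auto
  define h where "h x = (if x \<in> V1 then Inl (h1 x) else Inr (h2 x))" for x
  have "bij_betw h V (Inl ` W1 \<union> Inr ` W2)"
    unfolding bij_betw_def
  proof
    show "inj_on h V" using h1(1) h2(1) assms(1,2)
      unfolding inj_on_def h_def bij_betw_def by auto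
    show "h ` V = Inl ` W1 \<union> Inr ` W2"
    proof
      show "h ` V \<subseteq> Inl ` W1 \<union> Inr ` W2" using h1(1) h2(1) assms(1,2)
        unfolding h_def bij_betw_def by auto
      show "Inl ` W1 \<union> Inr ` W2 \<subseteq> h ` V"
      proof
        fix y assume "y \<in> Inl ` W1 \<union> Inr ` W2"
        then show "y \<in> h ` V"
        proof
          assume "y \<in> Inl ` W1"
          then obtain w where "w \<in> W1" "y = Inl w" by auto
          then obtain x where "x \<in> V1" "w = h1 x" using h1(1) unfolding bij_betw_def by auto
          then show ?thesis using \<open>y = Inl w\<close> assms(2) unfolding h_def by force
        next
          assume "y \<in> Inr ` W2"
          then obtain w where "w \<in> W2" "y = Inr w" by auto
          then obtain x where "x \<in> V2" "w = h2 x" using h2(1) unfolding bij_betw_def by auto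
          then show ?thesis using \<open>y = Inr w\<close> assms(1,2) unfolding h_def by force
        qed
      qed
    qed
  qed
  moreover have "\<forall>x\<in>V. h (g x) = k (h x)"
  proof
    fix x assume "x \<in> V"
    then consider "x \<in> V1" | "x \<in> V2" "x \<notin> V1" using assms(2) by auto
    then show "h (g x) = k (h x)"
    proof cases
      case 1 then show ?thesis using assms(3,7) h1(2) unfolding h_def by auto
    next
      case 2 then show ?thesis using assms(1,4,8) h2(2) unfolding h_def by auto
    qed
  qed
  ultimately show ?thesis by (rule fg_iso_direct)
qed

lemma fg_iso_prod:
  assumes "fg_iso (B, g) (B', g')" "fg_iso (C, p) (C', p')"
  shows "fg_iso (B \<times> C, \<lambda>(b, c). (g b, p c)) (B' \<times> C', \<lambda>(b, c). (g' b, p' c))"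
proof -
  obtain h1 where h1: "bij_betw h1 B B'" "\<forall>x\<in>B. h1 (g x) = g' (h1 x)"
    using assms(1) unfolding fg_iso_def by auto
  obtain h2 where h2: "bij_betw h2 C C'" "\<forall>x\<in>C. h2 (p x) = p' (h2 x)"
    using assms(2) unfolding fg_iso_def by auto
  show ?thesis
    by (rule fg_iso_direct[of "map_prod h1 h2"]) (use h1 h2 bij_betw_map_prod in auto)
qed

lemma fg_iso_sigma:
  assumes "\<forall>x\<in>C. piece x \<in> D" "\<forall>x\<in>C. p x \<in> C \<and> piece (p x) = piece x"
    and "\<forall>d\<in>D. fg_iso ({x\<in>C. piece x = d}, p) (W d, k d)"
  shows "fg_iso (C, p) (Sigma D W, \<lambda>(d, w). (d, k d w))"
proof -
  have "\<forall>d\<in>D. \<exists>h. bij_betw h {x\<in>C. piece x = d} (W d) \<and>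
          (\<forall>x\<in>{x\<in>C. piece x = d}. h (p x) = k d (h x))"
    using assms(3) unfolding fg_iso_def by auto
  then obtain H where H: "\<And>d. d \<in> D \<Longrightarrow> bij_betw (H d) {x\<in>C. piece x = d} (W d) \<and>
          (\<forall>x\<in>{x\<in>C. piece x = d}. H d (p x) = k d (H d x))"
    by metis
  define h where "h x = (piece x, H (piece x) x)" for x
  have "bij_betw h C (Sigma D W)"
    unfolding bij_betw_def
  proof
    show "inj_on h C"
    proof (rule inj_onI)
      fix x y assume xy: "x \<in> C" "y \<in> C" "h x = h y"
      then have e: "piece x = piece y" unfolding h_def by auto
      then have "H (piece x) x = H (piece x) y" using xy unfolding h_def by auto
      moreover have "inj_on (H (piece x)) {z\<in>C. piece z = piece x}"
        using H[of "piece x"] assms(1) xy by (auto simp: bij_betw_def)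
      ultimately show "x = y" using xy e by (auto simp: inj_on_def)
    qed
    show "h ` C = Sigma D W"
    proof
      show "h ` C \<subseteq> Sigma D W"
      proof
        fix y assume "y \<in> h ` C"
        then obtain x where x: "x \<in> C" "y = h x" by auto
        then have "H (piece x) x \<in> W (piece x)" using H[of "piece x"] assms(1)
          by (auto simp: bij_betw_def)
        then show "y \<in> Sigma D W" using x assms(1) unfolding h_def by auto
      qed
      show "Sigma D W \<subseteq> h ` C"
      proof
        fix y assume "y \<in> Sigma D W"
        then obtain d w where y: "d \<in> D" "w \<in> W d" "y = (d, w)" by auto
        then obtain x where "x \<in> {x\<in>C. piece x = d}" "w = H d x"
          using H[of d] unfolding bij_betw_def by auto
        then show "y \<in> h ` C" using y unfolding h_def by force
      qed
    qed
  qed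
  moreover have "\<forall>x\<in>C. h (p x) = (\<lambda>(d, w). (d, k d w)) (h x)"
    using H assms(1,2) unfolding h_def by auto
  ultimately show ?thesis by (rule fg_iso_direct)
qed

lemma inj_card_bij:
  assumes "inj_on h W" "h ` W \<subseteq> V" "card W = card V" "finite V"
  shows "bij_betw h W V"
proof -
  have "card (h ` W) = card V" using assms card_image by metis
  then have "h ` W = V" using assms card_subset_eq by metis
  then show ?thesis using assms(1) by (simp add: bij_betw_def)
qed

lemma funpow_mod_period:
  assumes "\<And>m. (f ^^ m) x = x \<longleftrightarrow> L dvd m"
  shows "(f ^^ a) x = (f ^^ (a mod L)) x"
proof -
  have a: "a = a mod L + L * (a div L)" by simp
  have "(f ^^ (L * (a div L))) x = x" using assms by simp
  moreover have "(f ^^ (a mod L + L * (a div L))) x = (f ^^ (a mod L)) ((f ^^ (L * (a div L))) x)"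
    by (simp only: funpow_add comp_apply)
  ultimately show ?thesis using a by metis
qed

lemma perm_uniform:
  assumes fin: "finite P" and L: "L > 0" and cl: "\<forall>x\<in>P. p x \<in> P"
    and per: "\<forall>x\<in>P. \<forall>m. (p ^^ m) x = x \<longleftrightarrow> L dvd m"
  shows "L dvd card P \<and> fg_iso (P, p) ({0..<card P div L} \<times> {0..<L}, \<lambda>(j, i). (j, Suc i mod L))"
proof -
  have it: "(p ^^ i) x \<in> P" if "x \<in> P" for x i
    using that cl by (induction i) auto
  define orb where "orb x = (\<lambda>i. (p ^^ i) x) ` {0..<L}" for x
  have modp: "(p ^^ a) x = (p ^^ (a mod L)) x" if "x \<in> P" for x a
    by (rule funpow_mod_period) (use per that in auto)
  have inj: "inj_on (\<lambda>i. (p ^^ i) x) {0..<L}" if "x \<in> P" for x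
  proof (rule inj_onI)
    fix i j assume ij: "i \<in> {0..<L}" "j \<in> {0..<L}" "(p ^^ i) x = (p ^^ j) x"
    have "(p ^^ (L - i)) ((p ^^ i) x) = (p ^^ (L - i)) ((p ^^ j) x)" using ij by simp
    then have "(p ^^ (L - i + i)) x = (p ^^ (L - i + j)) x" by (simp add: funpow_add)
    also have "L - i + i = L" using ij by auto
    moreover have "(p ^^ L) x = x" using per that by simp
    ultimately have "(p ^^ (L - i + j)) x = x" by simp
    then have "L dvd (L - i + j)" using per that by auto
    then obtain k where k: "L - i + j = L * k" by (erule dvdE)
    have "0 < L - i + j" "L - i + j < L * 2" using ij by auto
    then have "0 < L * k" "L * k < L * 2" using k by presburger+
    then have "k < 2" "0 < k" by (simp_all add: mult_less_cancel1)
    then have "k = 1" by arith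
    then have "L - i + j = L" using k by simp
    then show "i = j" using ij by auto
  qed
  have corb: "card (orb x) = L" if "x \<in> P" for x
    unfolding orb_def using card_image[OF inj[OF that]] by simp
  have orbP: "orb x \<subseteq> P" if "x \<in> P" for x using it that unfolding orb_def by auto
  have selfo: "x \<in> orb x" if "x \<in> P" for x
    unfolding orb_def using L by (auto intro!: image_eqI[of _ _ 0])
  have orb_eq: "orb y = orb x" if "x \<in> P" "y \<in> orb x" for x y
  proof -
    have "y \<in> (\<lambda>i. (p ^^ i) x) ` {0..<L}" using that(2) by (simp add: orb_def)
    then obtain i where i: "i < L" "y = (p ^^ i) x" by auto
    have "orb y \<subseteq> orb x"
    proof
      fix z assume "z \<in> orb y"
      then obtain j where j: "j < L" "z = (p ^^ j) y" unfolding orb_def by auto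
      then have "z = (p ^^ (j + i)) x" using i by (simp add: funpow_add)
      also have "\<dots> = (p ^^ ((j + i) mod L)) x" by (rule modp[OF that(1)])
      finally show "z \<in> orb x" unfolding orb_def using L by auto
    qed
    moreover have "y \<in> P" using that orbP by auto
    moreover have "finite (orb x)" unfolding orb_def by simp
    ultimately show ?thesis using corb that card_subset_eq[of "orb x" "orb y"] by simp
  qed
  define Os where "Os = orb ` P"
  have finO: "finite Os" using fin unfolding Os_def by auto
  have UO: "\<Union>Os = P" using orbP selfo unfolding Os_def by blast
  have c1: "\<And>c. c \<in> Os \<Longrightarrow> card c = L" using corb unfolding Os_def by auto
  have c2: "\<And>c1 c2. c1 \<in> Os \<Longrightarrow> c2 \<in> Os \<Longrightarrow> c1 \<noteq> c2 \<Longrightarrow> c1 \<inter> c2 = {}"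
  proof -
    fix c1 c2 assume a: "c1 \<in> Os" "c2 \<in> Os" "c1 \<noteq> c2"
    then obtain x y where xy: "x \<in> P" "y \<in> P" "c1 = orb x" "c2 = orb y" unfolding Os_def by auto
    show "c1 \<inter> c2 = {}"
    proof (rule ccontr)
      assume "c1 \<inter> c2 \<noteq> {}"
      then obtain z where "z \<in> orb x" "z \<in> orb y" using xy by auto
      then have "orb z = orb x" "orb z = orb y" using orb_eq[OF xy(1)] orb_eq[OF xy(2)] by blast+
      then show False using a xy by simp
    qed
  qed
  have "L * card Os = card (\<Union>Os)"
    by (rule card_partition[OF finO]) (use UO fin c1 c2 in auto)
  then have cP: "card P = L * card Os" using UO by simp
  then have cO: "card P div L = card Os" using L by simp
  obtain e where e: "bij_betw e {0..<card Os} Os" using ex_bij_betw_nat_finite finO by blast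
  define rep where "rep j = (SOME x. x \<in> P \<and> orb x = e j)" for j
  have rep: "rep j \<in> P \<and> orb (rep j) = e j" if "j < card Os" for j
  proof -
    have "e j \<in> Os" using e that by (auto simp: bij_betw_def)
    then have "\<exists>x. x \<in> P \<and> orb x = e j" unfolding Os_def by auto
    then show ?thesis unfolding rep_def by (rule someI_ex)
  qed
  define h where "h = (\<lambda>(j, i). (p ^^ i) (rep j))"
  have "bij_betw h ({0..<card Os} \<times> {0..<L}) P"
  proof (rule inj_card_bij)
    show "inj_on h ({0..<card Os} \<times> {0..<L})"
    proof (rule inj_onI)
      fix a b assume ab: "a \<in> {0..<card Os} \<times> {0..<L}" "b \<in> {0..<card Os} \<times> {0..<L}" "h a = h b"
      obtain j i where a: "a = (j, i)" "j < card Os" "i < L" using ab by auto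
      obtain j' i' where b: "b = (j', i')" "j' < card Os" "i' < L" using ab by auto
      have eq: "(p ^^ i) (rep j) = (p ^^ i') (rep j')" using ab a b unfolding h_def by simp
      have "(p ^^ i) (rep j) \<in> orb (rep j)" "(p ^^ i') (rep j') \<in> orb (rep j')"
        unfolding orb_def using a b by auto
      then have "orb ((p ^^ i) (rep j)) = orb (rep j)" "orb ((p ^^ i') (rep j')) = orb (rep j')"
        using orb_eq[OF conjunct1[OF rep[OF a(2)]]] orb_eq[OF conjunct1[OF rep[OF b(2)]]] by blast+
      then have "orb (rep j) = orb (rep j')" using eq by simp
      then have "e j = e j'" using rep[OF a(2)] rep[OF b(2)] by simp
      then have "j = j'" using e a b by (auto simp: bij_betw_def inj_on_def)
      then have "i = i'" using eq inj[of "rep j"] rep a b by (auto simp: inj_on_def)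
      then show "a = b" using a b \<open>j = j'\<close> by simp
    qed
    show "h ` ({0..<card Os} \<times> {0..<L}) \<subseteq> P" using rep it unfolding h_def by auto
    show "card ({0..<card Os} \<times> {0..<L}) = card P" using cP by (simp add: card_cartesian_product)
    show "finite P" by (rule fin)
  qed
  moreover have "\<forall>w\<in>{0..<card Os} \<times> {0..<L}. (\<lambda>(j, i). (j, Suc i mod L)) w \<in> {0..<card Os} \<times> {0..<L}"
    using L by auto
  moreover have "\<forall>w\<in>{0..<card Os} \<times> {0..<L}. h ((\<lambda>(j, i). (j, Suc i mod L)) w) = p (h w)"
  proof
    fix w assume w: "w \<in> {0..<card Os} \<times> {0..<L}"
    obtain j i where a: "w = (j, i)" "j < card Os" "i < L" using w by auto
    have "(p ^^ (Suc i mod L)) (rep j) = (p ^^ Suc i) (rep j)" using modp[of "rep j" "Suc i"] rep[OF a(2)] by simp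
    then show "h ((\<lambda>(j, i). (j, Suc i mod L)) w) = p (h w)" using a unfolding h_def by simp
  qed
  ultimately have "fg_iso (P, p) ({0..<card Os} \<times> {0..<L}, \<lambda>(j, i). (j, Suc i mod L))"
    by (rule fg_iso_inv)
  then show ?thesis using cO cP by simp
qed

fun num :: "bool list \<Rightarrow> nat" where
  "num [] = 0"
| "num (b # bs) = (if b then 2 ^ length bs else 0) + num bs"

lemma num_less: "num bs < 2 ^ length bs"
  by (induction bs) auto

lemma num_inj: "length bs = length bs' \<Longrightarrow> num bs = num bs' \<Longrightarrow> bs = bs'"
proof (induction bs arbitrary: bs')
  case Nil then show ?case by simp
next
  case (Cons b bs)
  then obtain b' cs where bs': "bs' = b' # cs" by (cases bs') auto
  have l: "length cs = length bs" using Cons bs' by simp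
  have "num bs < 2 ^ length bs" "num cs < 2 ^ length bs" using num_less l by metis+
  then have "b = b'" using Cons.prems bs' l by (auto split: if_splits)
  then have "num bs = num cs" using Cons.prems bs' l by (cases b') auto
  then show ?case using Cons.IH l bs' \<open>b = b'\<close> by simp
qed

lemma pow_odd_inj:
  fixes x y :: nat
  shows "2 ^ a * (2 * x + 1) = 2 ^ b * (2 * y + 1) \<Longrightarrow> a = b \<and> x = y"
proof (induction a arbitrary: b)
  case 0
  note h = this
  then show ?case
  proof (cases b)
    case 0 then show ?thesis using h by simp
  next
    case (Suc b') then have "even (2 ^ b * (2 * y + 1))" by simp
    moreover have "odd (2 ^ b * (2 * y + 1))" by (subst h[symmetric]) simp
    ultimately show ?thesis by simp
  qed
next
  case (Suc a)
  then show ?case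
  proof (cases b)
    case 0 then have "odd (2 ^ b * (2 * y + 1))" by simp
    moreover have "even (2 ^ Suc a * (2 * x + 1))" by simp
    moreover have "2 ^ Suc a * (2 * x + 1) = 2 ^ b * (2 * y + 1)" by (rule Suc.prems)
    ultimately show ?thesis by (metis)
  next
    case (Suc b') then show ?thesis using Suc.IH[of b'] Suc.prems by simp
  qed
qed

lemma card_bool_lists_less: "card {bs :: bool list. length bs < s} = 2 ^ s - 1"
proof (induction s)
  case 0 then show ?case by simp
next
  case (Suc s)
  have e: "{bs :: bool list. length bs < Suc s} = {bs. length bs < s} \<union> {bs. length bs = s}" by auto
  have f1: "finite {bs :: bool list. length bs < s}"
    using finite_lists_length_le[of "UNIV :: bool set" s] by (rule finite_subset[rotated]) auto
  have f2: "finite {bs :: bool list. length bs = s}"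
    using finite_lists_length_eq[of "UNIV :: bool set" s] by simp
  have c2: "card {bs :: bool list. length bs = s} = 2 ^ s"
    using card_lists_length_eq[of "UNIV :: bool set" s] by simp
  have "card {bs :: bool list. length bs < Suc s} = card {bs :: bool list. length bs < s} + card {bs :: bool list. length bs = s}"
    unfolding e by (rule card_Un_disjoint) (use f1 f2 in auto)
  also have "\<dots> = 2 ^ s - 1 + 2 ^ s" using Suc c2 by simp
  also have "\<dots> = 2 ^ Suc s - 1" by simp
  finally show ?case .
qed

lemma finite_tree_verts: "finite (tree_verts s)"
proof -
  have "finite {bs :: bool list. length bs < s}"
    using finite_lists_length_le[of "UNIV :: bool set" s] by (rule finite_subset[rotated]) auto
  then show ?thesis unfolding tree_verts_def by simp
qed

lemma card_tree_verts: "card (tree_verts s) = 2 ^ s"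
proof -
  have "finite {bs :: bool list. length bs < s}"
    using finite_lists_length_le[of "UNIV :: bool set" s] by (rule finite_subset[rotated]) auto
  then have "card (tree_verts s) = Suc (card (Some ` {bs :: bool list. length bs < s}))"
    unfolding tree_verts_def by (subst card_insert_disjoint) auto
  also have "\<dots> = Suc (2 ^ s - 1)" by (subst card_image) (auto simp: card_bool_lists_less)
  also have "\<dots> = 2 ^ s" by simp
  finally show ?thesis .
qed

definition lab :: "nat \<Rightarrow> bool list option \<Rightarrow> nat" where
  "lab s t = (case t of None \<Rightarrow> 0 | Some bs \<Rightarrow> 2 ^ (s - Suc (length bs)) * (2 * num bs + 1))"

lemma pow_split: "k \<le> s \<Longrightarrow> (2::nat) ^ (s - k) * 2 ^ k = 2 ^ s"
  by (simp flip: power_add)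

lemma lab_less: "length bs < s \<Longrightarrow> lab s (Some bs) < 2 ^ s"
proof -
  assume l: "length bs < s"
  have h: "2 * num bs + 1 < 2 ^ Suc (length bs)" using num_less[of bs] by simp
  have "2 ^ (s - Suc (length bs)) * (2 * num bs + 1) < 2 ^ (s - Suc (length bs)) * 2 ^ Suc (length bs)"
    by (rule mult_less_mono2[OF h]) simp
  also have "\<dots> = 2 ^ s" using l by (intro pow_split) simp
  finally show ?thesis unfolding lab_def by simp
qed

lemma dbl_tree_iso:
  assumes "s \<ge> 1"
  shows "fg_iso ({0..<(2::nat) ^ s}, \<lambda>R. 2 * R mod 2 ^ s) (tree_verts s, tree_par)"
proof (rule fg_iso_inv[of "lab s"])
  show "bij_betw (lab s) (tree_verts s) {0..<2 ^ s}"
  proof (rule inj_card_bij)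
    show "inj_on (lab s) (tree_verts s)"
    proof (rule inj_onI)
      fix x y assume xy: "x \<in> tree_verts s" "y \<in> tree_verts s" "lab s x = lab s y"
      show "x = y"
      proof (cases x)
        case None
        then show ?thesis using xy by (cases y) (auto simp: lab_def)
      next
        case (Some bs)
        then obtain cs where y: "y = Some cs" using xy by (cases y) (auto simp: lab_def)
        have "2 ^ (s - Suc (length bs)) * (2 * num bs + 1) = 2 ^ (s - Suc (length cs)) * (2 * num cs + 1)"
          using xy Some y unfolding lab_def by simp
        from pow_odd_inj[OF this]
        have "s - Suc (length bs) = s - Suc (length cs) \<and> num bs = num cs" .
        moreover have "length bs < s" "length cs < s" using xy Some y by (auto simp: tree_verts_def)
        ultimately have "length bs = length cs" "num bs = num cs" by auto
        then show ?thesis using num_inj Some y by simp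
      qed
    qed
    show "lab s ` tree_verts s \<subseteq> {0..<2 ^ s}"
      using lab_less by (auto simp: tree_verts_def lab_def[of s None])
    show "card (tree_verts s) = card {0..<(2::nat) ^ s}" by (simp add: card_tree_verts)
  qed simp
  show "\<forall>w\<in>tree_verts s. tree_par w \<in> tree_verts s"
  proof
    fix w assume "w \<in> tree_verts s"
    then show "tree_par w \<in> tree_verts s"
      by (cases w rule: tree_par.cases) (auto simp: tree_verts_def)
  qed
  show "\<forall>w\<in>tree_verts s. lab s (tree_par w) = 2 * lab s w mod 2 ^ s"
  proof
    fix w assume w: "w \<in> tree_verts s"
    show "lab s (tree_par w) = 2 * lab s w mod 2 ^ s"
    proof (cases w rule: tree_par.cases)
      case 1 then show ?thesis by (simp add: lab_def)
    next
      case 2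
      have "2 * 2 ^ (s - 1) = (2::nat) ^ s" using assms by (cases s) auto
      then show ?thesis using 2 by (simp add: lab_def)
    next
      case (3 b bs)
      have l: "Suc (length bs) < s" using w 3 by (auto simp: tree_verts_def)
      have e: "2 * 2 ^ (s - Suc (Suc (length bs))) = (2::nat) ^ (s - Suc (length bs))"
        using l by (cases "s - Suc (length bs)") (auto simp: Suc_diff_Suc)
      have e2: "(2::nat) ^ (s - Suc (length bs)) * 2 ^ Suc (length bs) = 2 ^ s"
        using l by (intro pow_split) simp
      define B where "B = (if b then 2 ^ length bs else (0::nat))"
      have "lab s w = 2 ^ (s - Suc (Suc (length bs))) * (2 * (B + num bs) + 1)"
        by (simp add: lab_def B_def 3)
      then have "2 * lab s w = (2 * 2 ^ (s - Suc (Suc (length bs)))) * (2 * (B + num bs) + 1)"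
        by simp
      also have "\<dots> = 2 ^ (s - Suc (length bs)) * (2 * (B + num bs) + 1)" by (simp only: e)
      also have "\<dots> = 2 ^ (s - Suc (length bs)) * (2 * num bs + 1) + 2 ^ (s - Suc (length bs)) * 2 * B"
        by (simp add: algebra_simps)
      also have "2 ^ (s - Suc (length bs)) * 2 * B = (if b then 2 ^ s else 0)"
        using e2 by (simp add: B_def mult.assoc)
      finally have "2 * lab s w = 2 ^ (s - Suc (length bs)) * (2 * num bs + 1) + (if b then 2 ^ s else 0)" .
      moreover have "2 ^ (s - Suc (length bs)) * (2 * num bs + 1) < 2 ^ s"
        using lab_less[of bs s] l unfolding lab_def by simp
      ultimately have "2 * lab s w mod 2 ^ s = 2 ^ (s - Suc (length bs)) * (2 * num bs + 1)"
        by simp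
      then show ?thesis using 3 by (simp add: lab_def)
    qed
  qed
qed

definition depth :: "bool list option \<Rightarrow> nat" where
  "depth t = (case t of None \<Rightarrow> 0 | Some bs \<Rightarrow> Suc (length bs))"

lemma depth_par_Some: "depth (tree_par (Some v)) = length v"
  by (cases v) (auto simp: depth_def)

lemma mod_back: "(L::nat) > 0 \<Longrightarrow> ((k + L - a mod L) mod L + a) mod L = k mod L"
proof -
  assume L: "L > 0"
  have "((k + L - a mod L) mod L + a) mod L = ((k + L - a mod L) + a) mod L"
    by (simp add: mod_add_left_eq)
  also have "\<dots> = ((k + L - a mod L) + a mod L) mod L"
    by (simp add: mod_add_right_eq)
  also have "(k + L - a mod L) + a mod L = k + L"
  proof -
    have "a mod L < L" using L by simp
    then show ?thesis by arith
  qed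
  finally show ?thesis by simp
qed

lemma cyc_tree_iso:
  fixes M L :: "'d \<Rightarrow> nat"
  assumes L: "\<forall>d\<in>D. L d > 0"
  shows "fg_iso (tree_verts s \<times> Sigma D (\<lambda>d. {0..<M d} \<times> {0..<L d}),
                 \<lambda>(t, (d, j, i)). (tree_par t, (d, j, Suc i mod L d)))
         ({(d, j, x) | d j x. d \<in> D \<and> j < M d \<and> x \<in> cyc_tree_verts (L d) s},
                 \<lambda>(d, j, x). (d, j, cyc_tree_map (L d) x))"
proof (rule fg_iso_direct[of "\<lambda>(t, (d, j, i)). (d, j, ((i + depth t) mod L d, t))"])
  let ?V = "tree_verts s \<times> Sigma D (\<lambda>d. {0..<M d} \<times> {0..<L d})"
  let ?W = "{(d, j, x) | d j x. d \<in> D \<and> j < M d \<and> x \<in> cyc_tree_verts (L d) s}"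
  let ?h = "\<lambda>(t, (d, j, i)). (d, j, ((i + depth t) mod L d, t))"
  show "bij_betw ?h ?V ?W"
    unfolding bij_betw_def
  proof
    show "inj_on ?h ?V"
    proof (rule inj_onI)
      fix x y assume xy: "x \<in> ?V" "y \<in> ?V" "?h x = ?h y"
      obtain t d j i where x: "x = (t, (d, j, i))" "i < L d" using xy(1) by auto
      obtain t' d' j' i' where y: "y = (t', (d', j', i'))" "i' < L d'" using xy(2) by auto
      have e: "t = t'" "d = d'" "j = j'" "(i + depth t) mod L d = (i' + depth t) mod L d"
        using xy(3) x y by auto
      then have "[i + depth t = i' + depth t] (mod L d)" by (simp add: cong_def)
      then have "[i = i'] (mod L d)" by (simp add: cong_add_rcancel_nat)
      then have "i = i'" using x y e by (simp add: cong_def)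
      then show "x = y" using x y e by simp
    qed
    show "?h ` ?V = ?W"
    proof
      show "?h ` ?V \<subseteq> ?W"
      proof
        fix w assume "w \<in> ?h ` ?V"
        then obtain y where y: "y \<in> ?V" "w = ?h y" by (rule imageE)
        from y(1) obtain t d j i where yy: "y = (t, (d, j, i))" "t \<in> tree_verts s" "d \<in> D" "j < M d" "i < L d"
          by auto
        have x: "w = (d, j, ((i + depth t) mod L d, t))" "t \<in> tree_verts s" "d \<in> D" "j < M d" "i < L d"
          using y yy by auto
        have "(i + depth t) mod L d < L d" using L x(3) by simp
        then show "w \<in> ?W" using x unfolding cyc_tree_verts_def by auto
      qed
      show "?W \<subseteq> ?h ` ?V"
      proof
        fix w assume "w \<in> ?W"
        then obtain d j k t where w: "w = (d, j, (k, t))" "d \<in> D" "j < M d" "k < L d" "t \<in> tree_verts s"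
          by (auto simp: cyc_tree_verts_def)
        let ?i = "(k + L d - depth t mod L d) mod L d"
        have Lp: "L d > 0" using L w(2) by blast
        have m: "(?i + depth t) mod L d = k" using mod_back[OF Lp, of k "depth t"] w(4) by simp
        have hw: "w = ?h (t, (d, j, ?i))" using m w(1) by simp
        have "?i < L d" using Lp by simp
        then have mem: "(t, (d, j, ?i)) \<in> ?V" using w by simp
        show "w \<in> ?h ` ?V" using image_eqI[of w ?h, OF hw mem] .
      qed
    qed
  qed
  show "\<forall>x\<in>?V. ?h ((\<lambda>(t, (d, j, i)). (tree_par t, (d, j, Suc i mod L d))) x) =
        (\<lambda>(d, j, x). (d, j, cyc_tree_map (L d) x)) (?h x)"
  proof
    fix x assume "x \<in> ?V"
    then obtain t d j i where x: "x = (t, (d, j, i))" by auto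
    show "?h ((\<lambda>(t, (d, j, i)). (tree_par t, (d, j, Suc i mod L d))) x) =
        (\<lambda>(d, j, x). (d, j, cyc_tree_map (L d) x)) (?h x)"
    proof (cases t)
      case None
      then show ?thesis using x by (simp add: depth_def mod_Suc_eq)
    next
      case (Some v)
      have "(Suc i mod L d + length v) mod L d = (i + Suc (length v)) mod L d"
        by (simp add: mod_add_left_eq)
      then show ?thesis using x Some by (simp add: depth_par_Some) (simp add: depth_def)
    qed
  qed
qed

definition Amap :: "int \<Rightarrow> int \<times> int \<Rightarrow> int \<times> int" where
  "Amap m = (\<lambda>(T, V). ((1 + 2 * V) mod m, (T + V) mod m))"

lemma mod_inner_lin: "(c + k * (V mod a)) mod a = (c + k * V) mod (a::int)"
  by (metis mod_add_right_eq mod_mult_right_eq)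

lemma mod_nest3: "(x + y mod m + k * (z mod m)) mod m = (x + y + k * z) mod (m::int)"
proof -
  have "[x + y mod m + k * (z mod m) = x + y + k * z] (mod m)"
    by (intro cong_add cong_mult) (auto simp: cong_def)
  then show ?thesis by (simp add: cong_def)
qed

lemma fg_iso_refl: "fg_iso (V, g) (V, g)"
  by (rule fg_iso_direct[of id]) auto

lemma card_int_sq: "m \<ge> 0 \<Longrightarrow> card ({0..<m} \<times> {0..<(m::int)}) = nat m * nat m"
  by (simp add: card_cartesian_product)

lemma crt_step:
  fixes a b :: int
  assumes a: "a > 0" and b: "b > 0" and cop: "coprime a b"
  shows "fg_iso ({0..<a * b} \<times> {0..<a * b}, Amap (a * b))
                (({0..<a} \<times> {0..<a}) \<times> ({0..<b} \<times> {0..<b}), \<lambda>(x, y). (Amap a x, Amap b y))"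
proof (rule fg_iso_direct[of "\<lambda>(T, V). ((T mod a, V mod a), (T mod b, V mod b))"])
  let ?h = "\<lambda>(T, V). ((T mod a, V mod a), (T mod b, V mod b))"
  have ab: "a * b > 0" using a b by simp
  show "bij_betw ?h ({0..<a * b} \<times> {0..<a * b}) (({0..<a} \<times> {0..<a}) \<times> ({0..<b} \<times> {0..<b}))"
  proof (rule inj_card_bij)
    show "inj_on ?h ({0..<a * b} \<times> {0..<a * b})"
    proof (rule inj_onI)
      fix x y assume xy: "x \<in> {0..<a * b} \<times> {0..<a * b}" "y \<in> {0..<a * b} \<times> {0..<a * b}" "?h x = ?h y"
      obtain T V where x: "x = (T, V)" "0 \<le> T" "T < a * b" "0 \<le> V" "V < a * b" using xy(1) by auto
      obtain T' V' where y: "y = (T', V')" "0 \<le> T'" "T' < a * b" "0 \<le> V'" "V' < a * b" using xy(2) by auto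
      have e: "T mod a = T' mod a" "V mod a = V' mod a" "T mod b = T' mod b" "V mod b = V' mod b"
        using xy(3) x(1) y(1) by auto
      have "[T = T'] (mod a * b)" using coprime_cong_mult[of T T' a b] e cop by (simp add: cong_def)
      then have "T = T'" using x y by (simp add: cong_def)
      moreover have "[V = V'] (mod a * b)" using coprime_cong_mult[of V V' a b] e cop by (simp add: cong_def)
      then have "V = V'" using x y by (simp add: cong_def)
      ultimately show "x = y" using x y by simp
    qed
    show "?h ` ({0..<a * b} \<times> {0..<a * b}) \<subseteq> ({0..<a} \<times> {0..<a}) \<times> ({0..<b} \<times> {0..<b})"
      using a b by auto
    show "card ({0..<a * b} \<times> {0..<a * b}) = card (({0..<a} \<times> {0..<a}) \<times> ({0..<b} \<times> {0..<b}))"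
      using a b by (simp add: card_cartesian_product nat_mult_distrib)
  qed simp
  show "\<forall>x\<in>{0..<a * b} \<times> {0..<a * b}. ?h (Amap (a * b) x) = (\<lambda>(x, y). (Amap a x, Amap b y)) (?h x)"
  proof
    fix x assume "x \<in> {0..<a * b} \<times> {0..<a * b}"
    obtain T V where x: "x = (T, V)" by (cases x)
    show "?h (Amap (a * b) x) = (\<lambda>(x, y). (Amap a x, Amap b y)) (?h x)"
      unfolding x Amap_def using mod_inner_lin[of 1 2 V a] mod_inner_lin[of 1 2 V b]
      by (simp add: mod_mod_cancel mod_simps)
  qed
qed

lemma three_coprime_pow2: "coprime (3::int) (2 ^ s)"
  by (simp add: coprime_power_right_iff)

lemma pq_step:
  fixes m :: int
  assumes m: "m = 2 ^ s" "s \<ge> 1"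
  shows "fg_iso ({0..<m} \<times> {0..<m}, Amap m)
                ({0..<m} \<times> {0..<m}, \<lambda>(R, Q). (2 * R mod m, (1 - Q) mod m))"
proof (rule fg_iso_direct[of "\<lambda>(T, V). ((1 + T + 2 * V) mod m, (T - V) mod m)"])
  let ?h = "\<lambda>(T, V). ((1 + T + 2 * V) mod m, (T - V) mod m)"
  have mp: "m > 0" using m by simp
  show "bij_betw ?h ({0..<m} \<times> {0..<m}) ({0..<m} \<times> {0..<m})"
  proof (rule inj_card_bij)
    show "inj_on ?h ({0..<m} \<times> {0..<m})"
    proof (rule inj_onI)
      fix x y assume xy: "x \<in> {0..<m} \<times> {0..<m}" "y \<in> {0..<m} \<times> {0..<m}" "?h x = ?h y"
      obtain T V where x: "x = (T, V)" "0 \<le> T" "T < m" "0 \<le> V" "V < m" using xy(1) by auto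
      obtain T' V' where y: "y = (T', V')" "0 \<le> T'" "T' < m" "0 \<le> V'" "V' < m" using xy(2) by auto
      have e: "[1 + T + 2 * V = 1 + T' + 2 * V'] (mod m)" "[T - V = T' - V'] (mod m)"
        using xy(3) x(1) y(1) by (auto simp: cong_def)
      have "[(1 + T + 2 * V) - (T - V) = (1 + T' + 2 * V') - (T' - V')] (mod m)"
        using e by (rule cong_diff)
      then have "[1 + V * 3 = 1 + V' * 3] (mod m)" by (simp add: algebra_simps)
      then have "[V * 3 = V' * 3] (mod m)" by (simp add: cong_add_lcancel)
      then have "[V = V'] (mod m)" using cong_mult_rcancel[of 3 m V V'] three_coprime_pow2 m
        by (simp add: coprime_commute)
      then have v: "V = V'" using x y by (simp add: cong_def)
      have "[T - V + V = T' - V' + V'] (mod m)" using e(2) v by (intro cong_add) (simp_all add: cong_def)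
      then have "[T = T'] (mod m)" by simp
      then have "T = T'" using x y by (simp add: cong_def)
      then show "x = y" using x y v by simp
    qed
    show "?h ` ({0..<m} \<times> {0..<m}) \<subseteq> {0..<m} \<times> {0..<m}" using mp by auto
  qed simp_all
  show "\<forall>x\<in>{0..<m} \<times> {0..<m}. ?h (Amap m x) = (\<lambda>(R, Q). (2 * R mod m, (1 - Q) mod m)) (?h x)"
  proof
    fix x assume "x \<in> {0..<m} \<times> {0..<m}"
    obtain T V where x: "x = (T, V)" by (cases x)
    have 1: "(1 + (1 + 2 * V) mod m + 2 * ((T + V) mod m)) mod m = 2 * ((1 + T + 2 * V) mod m) mod m"
    proof -
      have "(1 + (1 + 2 * V) mod m + 2 * ((T + V) mod m)) mod m = (1 + (1 + 2 * V) + 2 * (T + V)) mod m"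
        by (rule mod_nest3)
      also have "\<dots> = (2 * (1 + T + 2 * V)) mod m" by (simp add: algebra_simps)
      also have "\<dots> = 2 * ((1 + T + 2 * V) mod m) mod m" by (simp add: mod_simps)
      finally show ?thesis .
    qed
    have 2: "((1 + 2 * V) mod m - (T + V) mod m) mod m = (1 - (T - V) mod m) mod m"
    proof -
      have "((1 + 2 * V) mod m - (T + V) mod m) mod m = ((1 + 2 * V) - (T + V)) mod m"
        by (simp add: mod_simps)
      also have "\<dots> = (1 - (T - V)) mod m" by (simp add: algebra_simps)
      also have "\<dots> = (1 - (T - V) mod m) mod m" by (simp add: mod_simps)
      finally show ?thesis .
    qed
    show "?h (Amap m x) = (\<lambda>(R, Q). (2 * R mod m, (1 - Q) mod m)) (?h x)"
      unfolding x Amap_def using 1 2 by (simp add: add.assoc)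
  qed
qed

fun ee :: "nat \<Rightarrow> int" where
  "ee 0 = 0"
| "ee (Suc j) = 1 + 4 * ee j"

lemma ee3: "3 * ee j = 4 ^ j - 1"
  by (induction j) (auto simp: algebra_simps)

lemma A2:
  assumes "r > 0"
  shows "Amap r (Amap r (T, V)) = ((T + (1 + T + 2 * V)) mod r, (V + (1 + T + 2 * V)) mod r)"
proof -
  have 1: "(1 + 2 * ((T + V) mod r)) mod r = (T + (1 + T + 2 * V)) mod r"
    using mod_inner_lin[of 1 2 "T + V" r] by (simp add: algebra_simps)
  have 2: "((1 + 2 * V) mod r + (T + V) mod r) mod r = (V + (1 + T + 2 * V)) mod r"
    by (simp add: mod_add_eq algebra_simps)
  show ?thesis unfolding Amap_def using 1 2 by simp
qed

lemma A2j:
  assumes r: "r > 0" and T: "0 \<le> T" "T < r" and V: "0 \<le> V" "V < r"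
  shows "(Amap r ^^ (2 * j)) (T, V) =
         ((T + (1 + T + 2 * V) * ee j) mod r, (V + (1 + T + 2 * V) * ee j) mod r)"
  using T V
proof (induction j arbitrary: T V)
  case 0 then show ?case by simp
next
  case (Suc j)
  define R where "R = 1 + T + 2 * V"
  define T1 where "T1 = (T + R) mod r"
  define V1 where "V1 = (V + R) mod r"
  have f2: "(Amap r ^^ (2 * Suc j)) (T, V) = (Amap r ^^ (2 * j)) (Amap r (Amap r (T, V)))"
    by (simp add: funpow_swap1)
  also have "Amap r (Amap r (T, V)) = (T1, V1)" using A2[OF r] unfolding T1_def V1_def R_def by simp
  also have "(Amap r ^^ (2 * j)) (T1, V1) = ((T1 + (1 + T1 + 2 * V1) * ee j) mod r, (V1 + (1 + T1 + 2 * V1) * ee j) mod r)"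
    using Suc.IH[of T1 V1] r unfolding T1_def V1_def by simp
  also have "(T1 + (1 + T1 + 2 * V1) * ee j) mod r = (T + R * ee (Suc j)) mod r"
  proof -
    have c: "[T1 + (1 + T1 + 2 * V1) * ee j = (T + R) + (1 + (T + R) + 2 * (V + R)) * ee j] (mod r)"
      unfolding T1_def V1_def by (intro cong_add cong_mult cong_refl) (auto simp: cong_def)
    have e: "(T + R) + (1 + (T + R) + 2 * (V + R)) * ee j = T + R * ee (Suc j)"
      unfolding R_def by (simp add: algebra_simps)
    show ?thesis using c[unfolded e] unfolding cong_def .
  qed
  also have "(V1 + (1 + T1 + 2 * V1) * ee j) mod r = (V + R * ee (Suc j)) mod r"
  proof -
    have c: "[V1 + (1 + T1 + 2 * V1) * ee j = (V + R) + (1 + (T + R) + 2 * (V + R)) * ee j] (mod r)"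
      unfolding T1_def V1_def by (intro cong_add cong_mult cong_refl) (auto simp: cong_def)
    have e: "(V + R) + (1 + (T + R) + 2 * (V + R)) * ee j = V + R * ee (Suc j)"
      unfolding R_def by (simp add: algebra_simps)
    show ?thesis using c[unfolded e] unfolding cong_def .
  qed
  finally show ?case unfolding R_def .
qed

lemma mod_add_self_iff:
  assumes "0 \<le> T" "T < (r::int)"
  shows "(T + y) mod r = T \<longleftrightarrow> r dvd y"
proof -
  have "(T + y) mod r = T \<longleftrightarrow> [T + y = T + 0] (mod r)" using assms by (simp add: cong_def)
  also have "\<dots> \<longleftrightarrow> [y = 0] (mod r)" using cong_add_lcancel_0[of T y r] by simp
  also have "\<dots> \<longleftrightarrow> r dvd y" by (simp add: cong_0_iff)
  finally show ?thesis .
qed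

lemma fix2:
  assumes r: "r > 0" and T: "0 \<le> T" "T < r" and V: "0 \<le> V" "V < r"
  shows "(Amap r ^^ (2 * j)) (T, V) = (T, V) \<longleftrightarrow> r dvd (1 + T + 2 * V) * ee j"
  using A2j[OF assms, of j] mod_add_self_iff[OF T] mod_add_self_iff[OF V] by simp

lemma dvd_crit:
  fixes R r :: int
  assumes r: "r > 0"
  shows "r dvd R * ee j \<longleftrightarrow> (3 * (r div gcd R r)) dvd (4 ^ j - 1)"
proof -
  define g where "g = gcd R r"
  have gp: "g > 0" using r unfolding g_def by simp
  define d where "d = r div g"
  define R' where "R' = R div g"
  have rd: "r = g * d" unfolding d_def g_def by simp
  have Rd: "R = g * R'" unfolding R'_def g_def by simp
  have cop: "coprime R' d" unfolding R'_def d_def g_def using r by (intro div_gcd_coprime) auto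
  have "r dvd R * ee j \<longleftrightarrow> g * d dvd g * (R' * ee j)" using rd Rd by (simp add: mult.assoc)
  also have "\<dots> \<longleftrightarrow> d dvd R' * ee j" using gp by simp
  also have "\<dots> \<longleftrightarrow> d dvd ee j" using cop coprime_dvd_mult_right_iff coprime_commute by metis
  also have "\<dots> \<longleftrightarrow> 3 * d dvd 3 * ee j" by simp
  also have "\<dots> \<longleftrightarrow> 3 * d dvd 4 ^ j - 1" by (simp add: ee3)
  finally show ?thesis unfolding d_def g_def .
qed

lemma ord_crit:
  fixes dn :: nat
  shows "int (3 * dn) dvd (4 ^ j - 1) \<longleftrightarrow> ord (3 * dn) 4 dvd j"
proof -
  have "int (3 * dn) dvd (4 ^ j - 1) \<longleftrightarrow> [int (4 ^ j) = int 1] (mod int (3 * dn))"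
    by (simp add: cong_iff_dvd_diff)
  also have "\<dots> \<longleftrightarrow> [4 ^ j = 1] (mod (3 * dn))" by (rule cong_int_iff)
  also have "\<dots> \<longleftrightarrow> ord (3 * dn) 4 dvd j" by (rule ord_divides)
  finally show ?thesis .
qed

definition pimap :: "int \<Rightarrow> int \<Rightarrow> int \<times> (int \<times> int) \<Rightarrow> int \<times> (int \<times> int)" where
  "pimap m r = (\<lambda>(Q, X). ((1 - Q) mod m, Amap r X))"

definition pc' :: "int \<Rightarrow> int \<times> int \<Rightarrow> nat" where
  "pc' r = (\<lambda>(T, V). nat (r div gcd (1 + T + 2 * V) r))"

definition pc :: "int \<Rightarrow> int \<times> (int \<times> int) \<Rightarrow> nat" where
  "pc r c = pc' r (snd c)"

lemma funpow_pair0: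
  fixes f :: "'a \<Rightarrow> 'a" and g :: "'b \<Rightarrow> 'b"
  shows "((\<lambda>(a, b). (f a, g b)) ^^ k) x = ((f ^^ k) (fst x), (g ^^ k) (snd x))"
  by (induction k) (auto simp: split_beta funpow.simps)

lemma funpow_pair:
  fixes f :: "'a \<Rightarrow> 'a" and g :: "'b \<Rightarrow> 'b"
  shows "((\<lambda>(a, b). (f a, g b)) ^^ k) (a, b) = ((f ^^ k) a, (g ^^ k) b)"
  using funpow_pair0[where f = f and g = g and k = k and x = "(a, b)"] by simp

lemma Qm_iter:
  assumes "(m::int) > 0" "0 \<le> Q" "Q < m"
  shows "((\<lambda>Q. (1 - Q) mod m) ^^ k) Q = (if even k then Q else (1 - Q) mod m)"
proof (induction k)
  case 0 then show ?case by simp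
next
  case (Suc k)
  show ?case
  proof (cases "even k")
    case True then show ?thesis using Suc by simp
  next
    case False
    have "(1 - (1 - Q) mod m) mod m = (1 - (1 - Q)) mod m" by (simp add: mod_diff_right_eq)
    also have "\<dots> = Q" using assms by simp
    finally show ?thesis using Suc False by simp
  qed
qed

lemma Qm_ne:
  assumes "m = (2::int) ^ s" "s \<ge> 1" "0 \<le> Q" "Q < m"
  shows "(1 - Q) mod m \<noteq> Q"
proof
  assume h: "(1 - Q) mod m = Q"
  have "(1 - Q) mod m = Q mod m" using h assms by simp
  then have "m dvd (1 - Q) - Q" by (simp add: mod_eq_dvd_iff)
  moreover have "2 dvd m" using assms by (cases s) auto
  ultimately have "2 dvd (1 - Q) - Q" by (rule dvd_trans[rotated])
  then have "2 dvd 1 - 2 * Q" by (simp add: algebra_simps)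
  then show False by presburger
qed

lemma period:
  assumes m: "m = (2::int) ^ s" "s \<ge> 1" and r: "r > 0"
    and c: "c \<in> {0..<m} \<times> ({0..<r} \<times> {0..<r})"
  shows "(pimap m r ^^ k) c = c \<longleftrightarrow> (2 * ord (3 * pc r c) 4) dvd k"
proof -
  obtain Q T V where cc: "c = (Q, (T, V))" "0 \<le> Q" "Q < m" "0 \<le> T" "T < r" "0 \<le> V" "V < r"
    using c by auto
  have mp: "m > 0" using m by simp
  have it: "(pimap m r ^^ k) c = (((\<lambda>Q. (1 - Q) mod m) ^^ k) Q, (Amap r ^^ k) (T, V))"
    unfolding pimap_def cc(1) by (rule funpow_pair)
  show ?thesis
  proof (cases "even k")
    case False
    then have "(pimap m r ^^ k) c \<noteq> c" using it cc Qm_iter[OF mp cc(2,3)] Qm_ne[OF m cc(2,3)] by simp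
    moreover have "\<not> (2 * ord (3 * pc r c) 4) dvd k" using False
      by (metis dvd_mult_left)
    ultimately show ?thesis by simp
  next
    case True
    then obtain j where k: "k = 2 * j" by (rule evenE)
    define R where "R = 1 + T + 2 * V"
    have nn: "r div gcd R r \<ge> 0" using r by (simp add: pos_imp_zdiv_nonneg_iff)
    have pcv: "pc r c = nat (r div gcd R r)" unfolding pc_def pc'_def cc(1) R_def by simp
    have "(pimap m r ^^ k) c = c \<longleftrightarrow> (Amap r ^^ (2 * j)) (T, V) = (T, V)"
      using it cc Qm_iter[OF mp cc(2,3)] True k by simp
    also have "\<dots> \<longleftrightarrow> r dvd R * ee j" using fix2[OF r cc(4-7)] R_def by simp
    also have "\<dots> \<longleftrightarrow> 3 * (r div gcd R r) dvd 4 ^ j - 1" by (rule dvd_crit[OF r])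
    also have "\<dots> \<longleftrightarrow> int (3 * pc r c) dvd 4 ^ j - 1" using pcv nn by simp
    also have "\<dots> \<longleftrightarrow> ord (3 * pc r c) 4 dvd j" by (rule ord_crit)
    also have "\<dots> \<longleftrightarrow> 2 * ord (3 * pc r c) 4 dvd k" using k by simp
    finally show ?thesis .
  qed
qed

lemma pimap_closed:
  assumes "m > 0" "r > 0" "c \<in> {0..<m} \<times> ({0..<r} \<times> {0..<r})"
  shows "pimap m r c \<in> {0..<m} \<times> ({0..<r} \<times> {0..<r})"
  using assms unfolding pimap_def Amap_def by auto

lemma pc_inv:
  assumes r: "r > 0" "odd r"
  shows "pc r (pimap m r c) = pc r c"
proof -
  obtain Q T V where cc: "c = (Q, (T, V))" by (cases c) auto
  have "(1 + (1 + 2 * V) mod r + 2 * ((T + V) mod r)) mod r = (1 + (1 + 2 * V) + 2 * (T + V)) mod r"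
    by (rule mod_nest3)
  then have e: "(1 + (1 + 2 * V) mod r + 2 * ((T + V) mod r)) mod r = (2 * (1 + T + 2 * V)) mod r"
    by (simp add: algebra_simps)
  have cop: "coprime r 2" using r by simp
  have "gcd (1 + (1 + 2 * V) mod r + 2 * ((T + V) mod r)) r
        = gcd ((1 + (1 + 2 * V) mod r + 2 * ((T + V) mod r)) mod r) r"
    using r by (simp add: gcd_mod_left)
  also have "\<dots> = gcd ((2 * (1 + T + 2 * V)) mod r) r" using e by simp
  also have "\<dots> = gcd (2 * (1 + T + 2 * V)) r" using r by (simp add: gcd_mod_left)
  also have "\<dots> = gcd (1 + T + 2 * V) r" by (rule gcd_mult_left_left_cancel[OF cop])
  finally show ?thesis unfolding pc_def pc'_def pimap_def Amap_def cc by simp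
qed

lemma div_eq_swap:
  fixes rn g d :: nat
  assumes "rn > 0" "g dvd rn" "d dvd rn"
  shows "rn div g = d \<longleftrightarrow> g = rn div d"
proof
  assume h: "rn div g = d"
  have gp: "g > 0" using assms by (auto intro: Nat.gr0I)
  have e: "rn = g * d" using h assms(2) by auto
  then have "d > 0" using assms(1) by (cases d) auto
  then show "g = rn div d" using e by simp
next
  assume h: "g = rn div d"
  have dp: "d > 0" using assms by (auto intro: Nat.gr0I)
  have e: "rn = d * g" using h assms(3) by auto
  then have "g > 0" using assms(1) by (cases g) auto
  then show "rn div g = d" using e by simp
qed

lemma card_nat_gcd:
  fixes rn d :: nat
  assumes rn: "rn > 0" and d: "d dvd rn"
  shows "card {k\<in>{0..<rn}. rn div gcd k rn = d} = totient d"
proof -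
  obtain kk where kk: "rn = d * kk" using d by (auto elim: dvdE)
  have dp: "d > 0" using rn kk by (cases d) auto
  have hd: "rn div d dvd rn" using kk dp by simp
  define f where "f k = (if k = 0 then rn else k)" for k :: nat
  have gf: "gcd (f k) rn = gcd k rn" for k unfolding f_def by simp
  have "bij_betw f {k\<in>{0..<rn}. rn div gcd k rn = d} {k\<in>{0<..rn}. gcd k rn = rn div d}"
    unfolding bij_betw_def
  proof
    show "inj_on f {k\<in>{0..<rn}. rn div gcd k rn = d}"
      unfolding f_def inj_on_def by auto
    show "f ` {k\<in>{0..<rn}. rn div gcd k rn = d} = {k\<in>{0<..rn}. gcd k rn = rn div d}"
    proof
      show "f ` {k\<in>{0..<rn}. rn div gcd k rn = d} \<subseteq> {k\<in>{0<..rn}. gcd k rn = rn div d}"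
      proof
        fix y assume "y \<in> f ` {k\<in>{0..<rn}. rn div gcd k rn = d}"
        then obtain k where k: "k < rn" "rn div gcd k rn = d" "y = f k" by auto
        have "gcd k rn = rn div d" using div_eq_swap[OF rn _ d, of "gcd k rn"] k by simp
        then show "y \<in> {k\<in>{0<..rn}. gcd k rn = rn div d}" using k gf rn unfolding f_def by auto
      qed
      show "{k\<in>{0<..rn}. gcd k rn = rn div d} \<subseteq> f ` {k\<in>{0..<rn}. rn div gcd k rn = d}"
      proof
        fix y assume y: "y \<in> {k\<in>{0<..rn}. gcd k rn = rn div d}"
        define k where "k = (if y = rn then 0 else y)"
        have fk: "f k = y" using y unfolding k_def f_def by auto
        have "gcd k rn = rn div d" using y gf[of k] fk by simp
        then have "rn div gcd k rn = d" using div_eq_swap[OF rn _ d, of "gcd k rn"] hd by simp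
        moreover have "k < rn" using y unfolding k_def by auto
        ultimately show "y \<in> f ` {k\<in>{0..<rn}. rn div gcd k rn = d}" using fk by force
      qed
    qed
  qed
  then have "card {k\<in>{0..<rn}. rn div gcd k rn = d} = card {k\<in>{0<..rn}. gcd k rn = rn div d}"
    by (rule bij_betw_same_card)
  also have "\<dots> = totient (rn div (rn div d))"
    using card_gcd_eq_totient[OF rn hd] by simp
  also have "rn div (rn div d) = d" using div_eq_swap[OF rn hd d] by simp
  finally show ?thesis .
qed

lemma card_int_gcd:
  fixes r :: int and d :: nat
  assumes r: "r > 0" and d: "d dvd nat r"
  shows "card {R\<in>{0..<r}. nat (r div gcd R r) = d} = totient d"
proof -
  define rn where "rn = nat r"
  have rr: "r = int rn" using r unfolding rn_def by simp
  have e: "{R\<in>{0..<r}. nat (r div gcd R r) = d} = int ` {k\<in>{0..<rn}. rn div gcd k rn = d}"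
  proof
    show "{R\<in>{0..<r}. nat (r div gcd R r) = d} \<subseteq> int ` {k\<in>{0..<rn}. rn div gcd k rn = d}"
    proof
      fix R assume R: "R \<in> {R\<in>{0..<r}. nat (r div gcd R r) = d}"
      then have R0: "R = int (nat R)" by simp
      have g: "gcd R (int rn) = int (gcd (nat R) rn)" using gcd_int_int_eq[of "nat R" rn] R0 by simp
      have "nat (r div gcd R r) = rn div gcd (nat R) rn" unfolding rr unfolding g by (simp flip: zdiv_int)
      then have "nat R \<in> {k\<in>{0..<rn}. rn div gcd k rn = d}"
        using R rr by auto
      then show "R \<in> int ` {k\<in>{0..<rn}. rn div gcd k rn = d}" using R0 by blast
    qed
    show "int ` {k\<in>{0..<rn}. rn div gcd k rn = d} \<subseteq> {R\<in>{0..<r}. nat (r div gcd R r) = d}"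
      unfolding rr by (auto simp: gcd_int_int_eq simp flip: zdiv_int)
  qed
  have "card {R\<in>{0..<r}. nat (r div gcd R r) = d} = card {k\<in>{0..<rn}. rn div gcd k rn = d}"
    unfolding e by (rule card_image) simp
  also have "\<dots> = totient d" using card_nat_gcd[of rn d] r d unfolding rn_def by simp
  finally show ?thesis .
qed

lemma card_pc':
  fixes r :: int and d :: nat
  assumes r: "r > 0" and d: "d dvd nat r"
  shows "card {X\<in>{0..<r} \<times> {0..<r}. pc' r X = d} = totient d * nat r"
proof -
  let ?S = "{R\<in>{0..<r}. nat (r div gcd R r) = d}"
  let ?phi = "\<lambda>(T, V). ((1 + T + 2 * V) mod r, V)"
  have "bij_betw ?phi {X\<in>{0..<r} \<times> {0..<r}. pc' r X = d} (?S \<times> {0..<r})"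
    unfolding bij_betw_def
  proof
    show "inj_on ?phi {X\<in>{0..<r} \<times> {0..<r}. pc' r X = d}"
    proof (rule inj_onI)
      fix x y assume xy: "x \<in> {X\<in>{0..<r} \<times> {0..<r}. pc' r X = d}" "y \<in> {X\<in>{0..<r} \<times> {0..<r}. pc' r X = d}"
        "?phi x = ?phi y"
      obtain T V where x: "x = (T, V)" "0 \<le> T" "T < r" using xy(1) by auto
      obtain T' V' where y: "y = (T', V')" "0 \<le> T'" "T' < r" using xy(2) by auto
      have v: "V = V'" and m: "(1 + T + 2 * V) mod r = (1 + T' + 2 * V) mod r"
        using xy(3) x(1) y(1) by auto
      have "[T + (1 + 2 * V) = T' + (1 + 2 * V)] (mod r)" using m by (simp add: cong_def algebra_simps)
      then have "[T = T'] (mod r)" by (simp add: cong_add_rcancel)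
      then have "T = T'" using x y by (simp add: cong_def)
      then show "x = y" using x y v by simp
    qed
    show "?phi ` {X\<in>{0..<r} \<times> {0..<r}. pc' r X = d} = ?S \<times> {0..<r}"
    proof
      show "?phi ` {X\<in>{0..<r} \<times> {0..<r}. pc' r X = d} \<subseteq> ?S \<times> {0..<r}"
      proof
        fix z assume "z \<in> ?phi ` {X\<in>{0..<r} \<times> {0..<r}. pc' r X = d}"
        then obtain X where X: "X \<in> {X\<in>{0..<r} \<times> {0..<r}. pc' r X = d}" "z = ?phi X" by (rule imageE)
        obtain T V where x: "X = (T, V)" "0 \<le> V" "V < r" "nat (r div gcd (1 + T + 2 * V) r) = d"
          using X(1) unfolding pc'_def by auto
        have "gcd ((1 + T + 2 * V) mod r) r = gcd (1 + T + 2 * V) r" using r by (simp add: gcd_mod_left)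
        then show "z \<in> ?S \<times> {0..<r}" using x X(2) r by simp
      qed
      show "?S \<times> {0..<r} \<subseteq> ?phi ` {X\<in>{0..<r} \<times> {0..<r}. pc' r X = d}"
      proof
        fix z assume z: "z \<in> ?S \<times> {0..<r}"
        then obtain R V where zz: "z = (R, V)" "0 \<le> R" "R < r" "nat (r div gcd R r) = d" "0 \<le> V" "V < r"
          by auto
        define T where "T = (R - 1 - 2 * V) mod r"
        have m: "(1 + T + 2 * V) mod r = R"
        proof -
          have "(1 + T + 2 * V) mod r = (T + (1 + 2 * V)) mod r" by (simp add: algebra_simps)
          also have "\<dots> = ((R - 1 - 2 * V) + (1 + 2 * V)) mod r" unfolding T_def by (simp add: mod_add_left_eq)
          also have "\<dots> = R" using zz by simp
          finally show ?thesis .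
        qed
        have "gcd (1 + T + 2 * V) r = gcd ((1 + T + 2 * V) mod r) r" using r by (simp add: gcd_mod_left)
        then have g: "gcd (1 + T + 2 * V) r = gcd R r" using m by simp
        have "(T, V) \<in> {X\<in>{0..<r} \<times> {0..<r}. pc' r X = d}"
          using zz g r unfolding pc'_def T_def by simp
        moreover have "z = ?phi (T, V)" using m zz by simp
        ultimately show "z \<in> ?phi ` {X\<in>{0..<r} \<times> {0..<r}. pc' r X = d}" by blast
      qed
    qed
  qed
  then have "card {X\<in>{0..<r} \<times> {0..<r}. pc' r X = d} = card (?S \<times> {0..<r})"
    by (rule bij_betw_same_card)
  also have "\<dots> = totient d * nat r" using card_int_gcd[OF r d] by (simp add: card_cartesian_product)
  finally show ?thesis .
qed

lemma card_pc:
  fixes m r :: int and d :: nat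
  assumes m: "m > 0" and r: "r > 0" and d: "d dvd nat r"
  shows "card {c\<in>{0..<m} \<times> ({0..<r} \<times> {0..<r}). pc r c = d} = totient d * (nat m * nat r)"
proof -
  have "{c\<in>{0..<m} \<times> ({0..<r} \<times> {0..<r}). pc r c = d} = {0..<m} \<times> {X\<in>{0..<r} \<times> {0..<r}. pc' r X = d}"
    unfolding pc_def by auto
  then show ?thesis using card_pc'[OF r d] by (simp add: card_cartesian_product)
qed

lemma pc_dvd:
  assumes r: "r > 0" shows "pc r c dvd nat r"
proof -
  obtain Q T V where cc: "c = (Q, (T, V))" by (cases c) auto
  define x where "x = r div gcd (1 + T + 2 * V) r"
  have "x dvd r" unfolding x_def using r by (simp add: div_dvd_iff_mult)
  moreover have "x \<ge> 0" unfolding x_def using r by (simp add: pos_imp_zdiv_nonneg_iff)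
  ultimately have "int (nat x) dvd int (nat r)" using r by simp
  then have "nat x dvd nat r" by (simp only: int_dvd_int_iff)
  then show ?thesis unfolding pc_def pc'_def cc x_def by simp
qed

lemma dbl_int_iso:
  assumes "s \<ge> 1"
  shows "fg_iso ({0..<(2::int) ^ s}, \<lambda>R. 2 * R mod 2 ^ s) (tree_verts s, tree_par)"
proof (rule fg_iso_trans[OF _ dbl_tree_iso[OF assms]])
  show "fg_iso ({0..<(2::int) ^ s}, \<lambda>R. 2 * R mod 2 ^ s) ({0..<(2::nat) ^ s}, \<lambda>R. 2 * R mod 2 ^ s)"
  proof (rule fg_iso_direct[of nat])
    have "bij_betw nat {0..<int (2 ^ s)} {0..<2 ^ s}"
    proof (rule bij_betwI[of _ _ _ int])
    qed auto
    then show "bij_betw nat {0..<(2::int) ^ s} {0..<2 ^ s}" by simp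
    show "\<forall>x\<in>{0..<(2::int) ^ s}. nat (2 * x mod 2 ^ s) = 2 * nat x mod 2 ^ s"
      by (auto simp: nat_mod_distrib nat_mult_distrib nat_power_eq)
  qed
qed

lemma pi_part:
  fixes s rn :: nat
  assumes s: "s \<ge> 1" and rn: "odd rn"
  defines "a \<equiv> (2::int) ^ s" and "b \<equiv> int rn"
  defines "L \<equiv> \<lambda>d. 2 * ord (3 * d) 4" and "M \<equiv> \<lambda>d. totient d * (2 ^ s * rn) div (2 * ord (3 * d) 4)"
  shows "fg_iso ({0..<a} \<times> ({0..<b} \<times> {0..<b}), pimap a b)
           (Sigma {d. d dvd rn} (\<lambda>d. {0..<M d} \<times> {0..<L d}),
            \<lambda>(d, w). (d, (\<lambda>(j, i). (j, Suc i mod L d)) w))"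
proof (rule fg_iso_sigma[where piece = "pc b"])
  let ?C = "{0..<a} \<times> ({0..<b} \<times> {0..<b})"
  have ap: "a > 0" unfolding a_def by simp
  have bp: "b > 0" unfolding b_def using rn by (cases rn) auto
  have bo: "odd b" unfolding b_def using rn by simp
  have nb: "nat b = rn" unfolding b_def by simp
  show "\<forall>x\<in>?C. pc b x \<in> {d. d dvd rn}" using pc_dvd[OF bp] nb by simp
  show "\<forall>x\<in>?C. pimap a b x \<in> ?C \<and> pc b (pimap a b x) = pc b x"
    using pimap_closed[OF ap bp] pc_inv[OF bp bo] by blast
  show "\<forall>d\<in>{d. d dvd rn}. fg_iso ({x\<in>?C. pc b x = d}, pimap a b) ({0..<M d} \<times> {0..<L d}, (\<lambda>(j, i). (j, Suc i mod L d)))"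
  proof
    fix d assume d: "d \<in> {d. d dvd rn}"
    then have dodd: "odd d" using rn by (auto intro: dvd_trans)
    have "odd (3 * d)" using dodd by simp
    then have "coprime (3 * d) (2::nat)" by simp
    then have "coprime (3 * d) ((2::nat) ^ 2)" by (simp only: coprime_power_right_iff) simp
    then have "coprime (3 * d) (4::nat)" by simp
    then have Lp: "L d > 0" unfolding L_def by simp
    let ?P = "{x\<in>?C. pc b x = d}"
    have cP: "card ?P = totient d * (2 ^ s * rn)"
      using card_pc[OF ap bp, of d] d nb unfolding a_def by (simp add: nat_power_eq)
    have "L d dvd card ?P \<and> fg_iso (?P, pimap a b) ({0..<card ?P div L d} \<times> {0..<L d}, \<lambda>(j, i). (j, Suc i mod L d))"
    proof (rule perm_uniform)
      show "finite ?P" by simp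
      show "L d > 0" by (rule Lp)
      show "\<forall>x\<in>?P. pimap a b x \<in> ?P" using pimap_closed[OF ap bp] pc_inv[OF bp bo] by simp
      show "\<forall>x\<in>?P. \<forall>m. (pimap a b ^^ m) x = x \<longleftrightarrow> L d dvd m"
      proof (intro ballI allI)
        fix x m assume "x \<in> ?P"
        then have x: "x \<in> ?C" "pc b x = d" by auto
        have ad: "a = 2 ^ s" unfolding a_def by simp
        show "(pimap a b ^^ m) x = x \<longleftrightarrow> L d dvd m"
          using period[OF ad s bp x(1), of m] x(2) unfolding L_def by simp
      qed
    qed
    moreover have "card ?P div L d = M d" unfolding cP M_def L_def by simp
    ultimately show "fg_iso (?P, pimap a b) ({0..<M d} \<times> {0..<L d}, (\<lambda>(j, i). (j, Suc i mod L d)))"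
      by simp
  qed
qed

theorem partII:
  fixes s rn :: nat
  assumes s: "s \<ge> 1" and rn: "odd rn"
  shows "fg_iso ({0..<int (2 ^ s * rn)} \<times> {0..<int (2 ^ s * rn)}, Amap (int (2 ^ s * rn)))
     ({(d, j, x) | d j x. d dvd rn \<and> j < totient d * (2 ^ s * rn) div (2 * ord (3 * d) 4)
          \<and> x \<in> cyc_tree_verts (cyc_len d) s},
      \<lambda>(d, j, x). (d, j, cyc_tree_map (cyc_len d) x))"
proof -
  let ?a = "(2::int) ^ s" and ?b = "int rn"
  let ?M = "\<lambda>d. totient d * (2 ^ s * rn) div (2 * ord (3 * d) 4)"
  let ?L = "\<lambda>d::nat. 2 * ord (3 * d) 4"
  have ap: "?a > 0" by simp
  have bp: "?b > 0" using rn by (cases rn) auto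
  have cop: "coprime ?a ?b" using rn by (simp add: coprime_power_left_iff)
  have ab: "int (2 ^ s * rn) = ?a * ?b" by simp
  have S1: "fg_iso ({0..<int (2 ^ s * rn)} \<times> {0..<int (2 ^ s * rn)}, Amap (int (2 ^ s * rn)))
     (({0..<?a} \<times> {0..<?a}) \<times> ({0..<?b} \<times> {0..<?b}), \<lambda>(x, y). (Amap ?a x, Amap ?b y))"
    unfolding ab by (rule crt_step[OF ap bp cop])
  have S2: "fg_iso (({0..<?a} \<times> {0..<?a}) \<times> ({0..<?b} \<times> {0..<?b}), \<lambda>(x, y). (Amap ?a x, Amap ?b y))
     (({0..<?a} \<times> {0..<?a}) \<times> ({0..<?b} \<times> {0..<?b}),
      \<lambda>(x, y). ((\<lambda>(R, Q). (2 * R mod ?a, (1 - Q) mod ?a)) x, Amap ?b y))"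
    by (rule fg_iso_prod[OF pq_step[OF refl s] fg_iso_refl])
  have S3: "fg_iso (({0..<?a} \<times> {0..<?a}) \<times> ({0..<?b} \<times> {0..<?b}),
      \<lambda>(x, y). ((\<lambda>(R, Q). (2 * R mod ?a, (1 - Q) mod ?a)) x, Amap ?b y))
     ({0..<?a} \<times> ({0..<?a} \<times> ({0..<?b} \<times> {0..<?b})), \<lambda>(R, c). ((\<lambda>R. 2 * R mod ?a) R, pimap ?a ?b c))"
  proof (rule fg_iso_direct[of "\<lambda>((R, Q), X). (R, (Q, X))"])
    show "bij_betw (\<lambda>((R, Q), X). (R, (Q, X))) (({0..<?a} \<times> {0..<?a}) \<times> ({0..<?b} \<times> {0..<?b}))
       ({0..<?a} \<times> ({0..<?a} \<times> ({0..<?b} \<times> {0..<?b})))"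
      by (rule bij_betwI[of _ _ _ "\<lambda>(R, (Q, X)). ((R, Q), X)"]) auto
    show "\<forall>x\<in>({0..<?a} \<times> {0..<?a}) \<times> ({0..<?b} \<times> {0..<?b}).
       (\<lambda>((R, Q), X). (R, (Q, X))) ((\<lambda>(x, y). ((\<lambda>(R, Q). (2 * R mod ?a, (1 - Q) mod ?a)) x, Amap ?b y)) x) =
       (\<lambda>(R, c). ((\<lambda>R. 2 * R mod ?a) R, pimap ?a ?b c)) ((\<lambda>((R, Q), X). (R, (Q, X))) x)"
      by (auto simp: pimap_def)
  qed
  have S4: "fg_iso ({0..<?a} \<times> ({0..<?a} \<times> ({0..<?b} \<times> {0..<?b})), \<lambda>(R, c). ((\<lambda>R. 2 * R mod ?a) R, pimap ?a ?b c))
     (tree_verts s \<times> Sigma {d. d dvd rn} (\<lambda>d. {0..<?M d} \<times> {0..<?L d}),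
      \<lambda>(t, c). (tree_par t, (\<lambda>(d, w). (d, (\<lambda>(j, i). (j, Suc i mod ?L d)) w)) c))"
    by (rule fg_iso_prod[OF dbl_int_iso[OF s] pi_part[OF s rn]])
  have Lp: "\<forall>d\<in>{d. d dvd rn}. ?L d > 0"
  proof
    fix d assume d: "d \<in> {d. d dvd rn}"
    then have dodd: "odd d" using rn by (auto intro: dvd_trans)
    have "odd (3 * d)" using dodd by simp
    then have "coprime (3 * d) (2::nat)" by simp
    then have "coprime (3 * d) ((2::nat) ^ 2)" by (simp only: coprime_power_right_iff) simp
    then have "coprime (3 * d) (4::nat)" by simp
    then show "?L d > 0" by simp
  qed
  have S5': "fg_iso (tree_verts s \<times> Sigma {d. d dvd rn} (\<lambda>d. {0..<?M d} \<times> {0..<?L d}),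
                 \<lambda>(t, (d, j, i)). (tree_par t, (d, j, Suc i mod ?L d)))
         ({(d, j, x) | d j x. d \<in> {d. d dvd rn} \<and> j < ?M d \<and> x \<in> cyc_tree_verts (?L d) s},
                 \<lambda>(d, j, x). (d, j, cyc_tree_map (?L d) x))"
    by (rule cyc_tree_iso[OF Lp])
  have S5: "fg_iso (tree_verts s \<times> Sigma {d. d dvd rn} (\<lambda>d. {0..<?M d} \<times> {0..<?L d}),
      \<lambda>(t, c). (tree_par t, (\<lambda>(d, w). (d, (\<lambda>(j, i). (j, Suc i mod ?L d)) w)) c))
         ({(d, j, x) | d j x. d dvd rn \<and> j < ?M d \<and> x \<in> cyc_tree_verts (cyc_len d) s},
      \<lambda>(d, j, x). (d, j, cyc_tree_map (cyc_len d) x))"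
    using S5' unfolding mem_Collect_eq cyc_len_def
    by (rule fg_iso_cong) auto
  show ?thesis
    by (rule fg_iso_trans[OF S1 fg_iso_trans[OF S2 fg_iso_trans[OF S3 fg_iso_trans[OF S4 S5]]]])
qed

definition ring_of_type :: "('a :: field) ring" where
  "ring_of_type = \<lparr>carrier = UNIV, monoid.mult = (\<lambda>x y. x * y), one = 1, ring.zero = 0, add = (\<lambda>x y. x + y)\<rparr>"

lemma field_ring_of_type: "field (ring_of_type :: ('a :: field) ring)"
proof -
  have "\<exists>y. x + y = 0" for x :: 'a
    using add.right_inverse by blast
  moreover have "x \<noteq> 0 \<Longrightarrow> \<exists>y. x * y = 1" for x :: 'a
    by (rule exI[of _ "inverse x"]) auto
  ultimately show ?thesis
    unfolding ring_of_type_def using add.right_inverse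
    by unfold_locales (auto simp: algebra_simps Units_def)
qed

lemma pow_ring_of_type: "x [^]\<^bsub>ring_of_type\<^esub> (i::nat) = (x :: 'a :: field) ^ i"
  by (induction i) (auto simp: ring_of_type_def)

lemma finite_field_gen:
  shows "\<exists>\<gamma> :: 'a :: {field, finite}. \<forall>x. x \<noteq> 0 \<longrightarrow> (\<exists>i::nat. x = \<gamma> ^ i)"
proof -
  interpret field "ring_of_type :: 'a ring" by (rule field_ring_of_type)
  have "finite (carrier (ring_of_type :: 'a ring))" by simp
  then obtain a where a: "a \<in> carrier (mult_of (ring_of_type :: 'a ring))"
    "carrier (mult_of (ring_of_type :: 'a ring)) = {a [^]\<^bsub>ring_of_type\<^esub> i | i::nat. i \<in> UNIV}"
    using finite_field_mult_group_has_gen by blast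
  have "\<forall>x::'a. x \<noteq> 0 \<longrightarrow> (\<exists>i::nat. x = a ^ i)"
  proof (intro allI impI)
    fix x :: 'a assume "x \<noteq> 0"
    then have "x \<in> carrier (mult_of (ring_of_type :: 'a ring))" by (simp add: ring_of_type_def)
    then show "\<exists>i::nat. x = a ^ i" using a(2) by (auto simp: pow_ring_of_type)
  qed
  then show ?thesis by blast
qed

lemma power_card_same:
  fixes x :: "'a :: {field, finite}"
  shows "x ^ card (UNIV :: 'a set) = x"
proof (cases "x = 0")
  case False
  have "x * (\<Prod>y\<in>UNIV-{0}. x * y) = x * x ^ (card (UNIV :: 'a set) - 1) * \<Prod>(UNIV-{0})"
    by (simp add: prod.distrib mult_ac)
  also have "x * x ^ (card (UNIV :: 'a set) - 1) = x ^ Suc (card (UNIV :: 'a set) - 1)"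
    by (subst power_Suc) auto
  also have "Suc (card (UNIV :: 'a set) - 1) = card (UNIV :: 'a set)"
    using finite_UNIV_card_ge_0[where ?'a = 'a] by simp
  also have "(\<Prod>y\<in>UNIV-{0}. x * y) = (\<Prod>y\<in>UNIV-{0}. y)"
    by (rule prod.reindex_bij_witness[of _ "\<lambda>y. y / x" "\<lambda>y. x * y"]) (use False in auto)
  finally show ?thesis
    by simp
qed (use finite_UNIV_card_ge_0[where ?'a = 'a] in auto)

lemma of_nat_card_zero: "of_nat (card (UNIV :: 'a :: {field, finite} set)) = (0 :: 'a)"
proof -
  have "(\<Sum>y\<in>(UNIV :: 'a set). y + 1) = (\<Sum>y\<in>(UNIV :: 'a set). y)"
    by (rule sum.reindex_bij_witness[of _ "\<lambda>y. y - 1" "\<lambda>y. y + 1"]) auto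
  then show ?thesis by (simp add: sum.distrib)
qed

lemma CHAR_eq:
  assumes "prime p" "card (UNIV :: 'a :: {field, finite} set) = p ^ m" "m > 0"
  shows "CHAR('a) = p"
proof -
  have "of_nat (p ^ m) = (0 :: 'a)" using of_nat_card_zero[where 'a = 'a] assms(2) by simp
  then have "CHAR('a) dvd p ^ m" by (simp only: of_nat_eq_0_iff_char_dvd)
  moreover have pc: "prime CHAR('a)"
    using prime_CHAR_semidom[where 'a = 'a] finite_imp_CHAR_pos[where 'a = 'a] by simp
  ultimately have "CHAR('a) dvd p" using prime_dvd_power by blast
  then show ?thesis using pc assms(1) by (simp add: primes_dvd_imp_eq)
qed

locale ffs =
  fixes c :: "'a :: {field, finite}" and p k q s r :: nat
  assumes prime: "prime p" and podd: "odd p" and k1: "k \<ge> 1" and qdef: "q = p ^ k"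
    and card: "card (UNIV :: 'a set) = q ^ 2" and qs: "q - 1 = 2 ^ s * r" and rodd: "odd r"
    and cq: "c ^ q = c" and c0: "c \<noteq> 0"
begin

definition n :: nat where "n = q - 1"

lemma p3: "p \<ge> 3"
proof -
  have "p \<ge> 2" using prime by (simp add: prime_ge_2_nat)
  moreover have "p \<noteq> 2" using podd by auto
  ultimately show ?thesis by simp
qed

lemma q3: "q \<ge> 3"
proof -
  have "p \<le> p ^ k" using k1 p3 by (simp add: self_le_power)
  then show ?thesis using p3 qdef by simp
qed

lemma qodd: "odd q" using podd qdef by simp

lemma n_eq: "q = n + 1" unfolding n_def using q3 by simp

lemma n_even: "even n" using qodd n_eq by (metis even_add odd_one)

lemma n2: "n \<ge> 2" using q3 n_eq by simp

lemma n_sr: "n = 2 ^ s * r" using qs unfolding n_def by simp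

lemma s1: "s \<ge> 1"
proof (rule ccontr)
  assume "\<not> s \<ge> 1"
  then have "s = 0" by simp
  then have "n = r" using n_sr by simp
  then show False using n_even rodd by simp
qed

lemma pow_q2: "(x :: 'a) ^ (q ^ 2) = x"
  using power_card_same[of x] card by simp

lemma pow_qq: "((x :: 'a) ^ q) ^ q = x"
  using pow_q2[of x] by (simp add: power_mult[symmetric] power2_eq_square)

lemma char: "CHAR('a) = p"
  using CHAR_eq[OF prime, of "2 * k"] card qdef k1 by (simp add: power_mult[symmetric] mult.commute)

lemma frob_add: "((x :: 'a) + y) ^ q = x ^ q + y ^ q"
  using freshmans_dream'[of q k x y] char prime qdef by simp

lemma frob_neg: "(- (x :: 'a)) ^ q = - (x ^ q)"
  using qodd by (simp add: power_minus_odd)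

lemma frob_diff: "((x :: 'a) - y) ^ q = x ^ q - y ^ q"
  using frob_add[of x "- y"] frob_neg[of y] by simp

lemma two_ne0: "(2 :: 'a) \<noteq> 0"
proof
  assume "(2 :: 'a) = 0"
  then have "of_nat 2 = (0 :: 'a)" by simp
  then have "CHAR('a) dvd 2" by (simp only: of_nat_eq_0_iff_char_dvd)
  then have "p dvd 2" using char by simp
  then have "p \<le> 2" by (simp add: dvd_imp_le)
  then show False using p3 by simp
qed

lemma frob_one: "(1 :: 'a) ^ q = 1" by simp

lemma frob_two: "(2 :: 'a) ^ q = 2"
  using frob_add[of 1 1] by (simp add: one_add_one)

lemma frob_div: "((x :: 'a) / y) ^ q = x ^ q / y ^ q"
  by (simp add: power_divide)

end

context ffs begin

definition gam :: 'a where "gam = (SOME \<gamma>. \<forall>x. x \<noteq> 0 \<longrightarrow> (\<exists>i::nat. x = \<gamma> ^ i))"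

lemma gam: "x \<noteq> 0 \<Longrightarrow> \<exists>i::nat. x = gam ^ i"
proof -
  have "\<forall>x::'a. x \<noteq> 0 \<longrightarrow> (\<exists>i::nat. x = gam ^ i)"
    unfolding gam_def by (rule someI_ex[OF finite_field_gen])
  then show "x \<noteq> 0 \<Longrightarrow> \<exists>i::nat. x = gam ^ i" by blast
qed

lemma minus_one_ne_one: "(-1 :: 'a) \<noteq> 1"
proof
  assume "(-1 :: 'a) = 1"
  then have "(2 :: 'a) = 0" by (metis add.inverse_inverse one_add_one neg_eq_iff_add_eq_0)
  then show False using two_ne0 by simp
qed

lemma gam_ne0: "gam \<noteq> 0"
proof
  assume g0: "gam = 0"
  obtain i where i: "(-1 :: 'a) = gam ^ i" using gam[of "-1"] by auto
  show False
  proof (cases i)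
    case 0 then show False using i minus_one_ne_one by simp
  next
    case (Suc j) then show False using i g0 by simp
  qed
qed

definition NN :: nat where "NN = q ^ 2 - 1"

lemma NN_eq: "NN = (q + 1) * n"
proof -
  have "NN = (n + 1) ^ 2 - 1" unfolding NN_def using n_eq by simp
  also have "\<dots> = (n + 1 + 1) * n" by (simp add: power2_eq_square algebra_simps)
  finally show ?thesis by (subst n_eq) simp
qed

lemma NN_pos: "NN > 0" using NN_eq n2 by simp

lemma pow_mod_gen: "(a :: 'a) ^ m = 1 \<Longrightarrow> a ^ j = a ^ (j mod m)"
proof -
  assume h: "a ^ m = 1"
  have "a ^ j = a ^ (m * (j div m) + j mod m)" by simp
  also have "\<dots> = (a ^ m) ^ (j div m) * a ^ (j mod m)" by (simp only: power_add power_mult)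
  finally show ?thesis using h by simp
qed

lemma gam_N: "gam ^ NN = 1"
proof -
  have "gam * gam ^ NN = gam ^ Suc NN" by simp
  also have "Suc NN = q ^ 2" unfolding NN_def using q3 by simp
  also have "gam ^ (q ^ 2) = gam * 1" using pow_q2 by simp
  finally show ?thesis using gam_ne0 by simp
qed

lemma card_nonzero: "card (UNIV - {0 :: 'a}) = NN"
  unfolding NN_def using card by (simp add: card_Diff_singleton)

lemma gam_ord: "gam ^ i = 1 \<Longrightarrow> NN dvd i"
proof (rule ccontr)
  assume h: "gam ^ i = 1" and nd: "\<not> NN dvd i"
  define m where "m = i mod NN"
  have mp: "m > 0" using nd unfolding m_def by (simp add: dvd_eq_mod_eq_0)
  have mN: "m < NN" unfolding m_def using NN_pos by simp
  have gm: "gam ^ m = 1" using pow_mod_gen[OF gam_N, of i] h unfolding m_def by simp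
  have "UNIV - {0} \<subseteq> (\<lambda>j. gam ^ j) ` {0..<m}"
  proof
    fix x :: 'a assume "x \<in> UNIV - {0}"
    then obtain j where "x = gam ^ j" using gam by auto
    then have "x = gam ^ (j mod m)" using pow_mod_gen[OF gm] by simp
    then show "x \<in> (\<lambda>j. gam ^ j) ` {0..<m}" using mp by auto
  qed
  then have "card (UNIV - {0 :: 'a}) \<le> card ((\<lambda>j. gam ^ j) ` {0..<m})" by (rule card_mono[rotated]) simp
  also have "\<dots> \<le> m" using card_image_le[of "{0..<m}" "\<lambda>j. gam ^ j"] by simp
  finally show False using card_nonzero mN by simp
qed

lemma gam_pow1: "gam ^ i = 1 \<longleftrightarrow> NN dvd i"
  using gam_ord gam_N by (auto elim!: dvdE simp: power_mult)

definition g :: 'a where "g = gam ^ (q + 1)"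

lemma g_pow1: "g ^ i = 1 \<longleftrightarrow> n dvd i"
proof -
  have "g ^ i = gam ^ ((q + 1) * i)" unfolding g_def by (rule power_mult[symmetric])
  then have "g ^ i = 1 \<longleftrightarrow> (q + 1) * n dvd (q + 1) * i" using gam_pow1 NN_eq by simp
  also have "\<dots> \<longleftrightarrow> n dvd i" by (simp only: nat_mult_dvd_cancel_disj) simp
  finally show ?thesis .
qed

lemma g_n: "g ^ n = 1" using g_pow1 by simp

lemma g_mod: "g ^ j = g ^ (j mod n)" using pow_mod_gen[OF g_n] .

lemma g_ne0: "g \<noteq> 0" unfolding g_def using gam_ne0 by simp

lemma gpow_ne0: "g ^ i \<noteq> 0" using g_ne0 by simp

lemma g_inj: "a < n \<Longrightarrow> b < n \<Longrightarrow> g ^ a = g ^ b \<Longrightarrow> a = b"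
proof -
  have main: "a = b" if ab: "a \<le> b" "b < n" "g ^ a = g ^ b" for a b
  proof -
    have h: "g ^ b = g ^ a * g ^ (b - a)" using ab(1) by (simp flip: power_add)
    have "g ^ a * g ^ (b - a) = g ^ a * 1" using h ab(3) by simp
    then have "g ^ (b - a) = 1" using mult_left_cancel[OF gpow_ne0[of a]] by blast
    then have "n dvd b - a" using g_pow1 by simp
    moreover have "b - a < n" using ab by simp
    ultimately have "b - a = 0" by (metis dvd_imp_le not_less neq0_conv)
    then show "a = b" using ab by simp
  qed
  assume "a < n" "b < n" "g ^ a = g ^ b"
  then show "a = b" using main[of a b] main[of b a] by (cases "a \<le> b") auto
qed

lemma gpow_inj_iff: "a < n \<Longrightarrow> b < n \<Longrightarrow> g ^ a = g ^ b \<longleftrightarrow> a = b"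
  using g_inj by auto

lemma q_mod_n: "q mod n = 1"
proof -
  have "q mod n = (n + 1) mod n" using n_eq by simp
  also have "\<dots> = 1 mod n" by (rule mod_add_self1)
  also have "\<dots> = 1" using n2 by simp
  finally show ?thesis .
qed

lemma g_frob: "(g ^ i) ^ q = g ^ i"
proof -
  have "(g ^ i) ^ q = g ^ (i * q)" by (simp add: power_mult)
  also have "\<dots> = g ^ (i * q mod n)" by (rule g_mod)
  also have "i * q mod n = i mod n" using q_mod_n by (metis mod_mult_right_eq mult.right_neutral)
  also have "g ^ (i mod n) = g ^ i" using g_mod by simp
  finally show ?thesis .
qed

lemma inK: "x ^ q = x \<Longrightarrow> x \<noteq> 0 \<Longrightarrow> \<exists>i<n. x = g ^ i"
proof -
  assume xq: "x ^ q = x" and x0: "x \<noteq> 0"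
  obtain j where j: "x = gam ^ j" using gam x0 by blast
  have e: "j * q = j + j * n" by (subst n_eq) (simp add: algebra_simps)
  have "gam ^ j * gam ^ (j * n) = gam ^ (j * q)" by (simp only: e power_add)
  also have "\<dots> = gam ^ j" using xq j by (simp add: power_mult)
  finally have "gam ^ (j * n) = 1" using gam_ne0 by simp
  then have "(q + 1) * n dvd j * n" using gam_pow1 NN_eq by simp
  then have "n * (q + 1) dvd n * j" by (metis mult.commute)
  then have "q + 1 dvd j" using n2 nat_mult_dvd_cancel_disj[of n "q + 1" j] by simp
  then obtain t where t: "j = (q + 1) * t" by (auto elim: dvdE)
  have "x = gam ^ ((q + 1) * t)" using j t by simp
  also have "\<dots> = g ^ t" unfolding g_def by (rule power_mult)
  finally have "x = g ^ t" .
  also have "\<dots> = g ^ (t mod n)" by (rule g_mod)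
  finally show ?thesis using n2 by (intro exI[of _ "t mod n"]) simp
qed

lemma K_eq: "{x :: 'a. x ^ q = x} = insert 0 ((\<lambda>i. g ^ i) ` {0..<n})"
proof
  show "{x :: 'a. x ^ q = x} \<subseteq> insert 0 ((\<lambda>i. g ^ i) ` {0..<n})"
    using inK by fastforce
  show "insert 0 ((\<lambda>i. g ^ i) ` {0..<n}) \<subseteq> {x :: 'a. x ^ q = x}"
    using g_frob q3 by auto
qed

lemma card_K: "card {x :: 'a. x ^ q = x} = q"
proof -
  have "inj_on (\<lambda>i. g ^ i) {0..<n}" using g_inj by (auto simp: inj_on_def)
  then have "card ((\<lambda>i. g ^ i) ` {0..<n}) = n" by (simp add: card_image)
  moreover have "0 \<notin> (\<lambda>i. g ^ i) ` {0..<n}" using gpow_ne0 by auto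
  ultimately show ?thesis unfolding K_eq using n_eq by simp
qed

end

context ffs begin

lemma exists_nonK: "\<exists>z :: 'a. z ^ q \<noteq> z"
proof (rule ccontr)
  assume "\<not> (\<exists>z :: 'a. z ^ q \<noteq> z)"
  then have "{x :: 'a. x ^ q = x} = UNIV" by auto
  then have "q ^ 2 = q" using card card_K by simp
  then show False using q3 by (simp add: power2_eq_square)
qed

definition zz :: 'a where "zz = (SOME z. z ^ q \<noteq> z)"
definition om :: 'a where "om = zz - zz ^ q"

lemma zz: "zz ^ q \<noteq> zz" unfolding zz_def by (rule someI_ex[OF exists_nonK])

lemma om_ne0: "om \<noteq> 0" unfolding om_def using zz by simp

lemma om_q: "om ^ q = - om"
  unfolding om_def frob_diff pow_qq by simp

lemma two_x_zero: "2 * (x :: 'a) = 0 \<Longrightarrow> x = 0" using two_ne0 by simp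

lemma uniq:
  assumes "t ^ q = t" "v ^ q = v" "t' ^ q = t'" "v' ^ q = v'" "t + om * v = t' + om * v'"
  shows "t = t' \<and> v = v'"
proof (cases "v = v'")
  case True then show ?thesis using assms by simp
next
  case False
  then have vv: "v - v' \<noteq> 0" by simp
  have "om * (v - v') = t' - t" using assms(5) by (simp add: algebra_simps)
  then have oe: "om = (t' - t) / (v - v')" using vv by (simp add: field_simps)
  have "om ^ q = (t' ^ q - t ^ q) / (v ^ q - v' ^ q)" unfolding oe frob_div frob_diff ..
  also have "\<dots> = om" using assms(1-4) oe by simp
  finally have "- om = om" using om_q by simp
  then have "2 * om = 0" by (simp add: algebra_simps)
  then show ?thesis using om_ne0 two_x_zero by blast
qed

lemma decomp: "\<exists>t v. t ^ q = t \<and> v ^ q = v \<and> x = t + om * v"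
proof -
  let ?K = "{x :: 'a. x ^ q = x}"
  let ?phi = "\<lambda>(t, v). t + om * v"
  have "inj_on ?phi (?K \<times> ?K)"
  proof (rule inj_onI)
    fix x y assume xy: "x \<in> ?K \<times> ?K" "y \<in> ?K \<times> ?K" "?phi x = ?phi y"
    obtain t v where x: "x = (t, v)" "t ^ q = t" "v ^ q = v" using xy(1) by auto
    obtain t' v' where y: "y = (t', v')" "t' ^ q = t'" "v' ^ q = v'" using xy(2) by auto
    have "t + om * v = t' + om * v'" using xy(3) x(1) y(1) by simp
    then show "x = y" using uniq[OF x(2,3) y(2,3)] x(1) y(1) by simp
  qed
  then have "card (?phi ` (?K \<times> ?K)) = q * q" using card_K by (simp add: card_image card_cartesian_product)
  then have "card (?phi ` (?K \<times> ?K)) = card (UNIV :: 'a set)" using card by (simp add: power2_eq_square)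
  then have "?phi ` (?K \<times> ?K) = UNIV" using card_subset_eq[of UNIV "?phi ` (?K \<times> ?K)"] by simp
  then have "x \<in> ?phi ` (?K \<times> ?K)" by simp
  then show ?thesis by auto
qed

lemma om_n: "om ^ n = -1"
proof -
  have "om * om ^ n = om ^ q" by (subst n_eq) simp
  also have "\<dots> = om * (-1)" using om_q by simp
  finally show ?thesis using mult_left_cancel[OF om_ne0] by blast
qed

definition delta :: 'a where "delta = om ^ 2"

lemma delta_q: "delta ^ q = delta"
proof -
  have "(om ^ 2) ^ q = (om ^ q) ^ 2" by (simp only: power_mult[symmetric] mult.commute)
  then show ?thesis unfolding delta_def using om_q by simp
qed

lemma delta_q': "delta ^ q = delta" by (rule delta_q)

lemma delta_ne0: "delta \<noteq> 0" unfolding delta_def using om_ne0 by simp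

definition DD :: nat where "DD = (SOME D. D < n \<and> delta = g ^ D)"

lemma DD: "DD < n \<and> delta = g ^ DD"
  unfolding DD_def by (rule someI_ex) (use inK[OF delta_q delta_ne0] in auto)

lemma DD_odd: "odd DD"
proof
  assume "even DD"
  then obtain e where e: "DD = 2 * e" by (rule evenE)
  obtain h where h: "n = 2 * h" using n_even by (rule evenE)
  have "delta ^ h = om ^ n" unfolding delta_def h by (simp add: power_mult)
  also have "\<dots> = -1" by (rule om_n)
  finally have 1: "delta ^ h = -1" .
  have "delta ^ h = g ^ (e * n)" using DD e h by (simp add: power_mult[symmetric] algebra_simps)
  also have "\<dots> = 1" using g_pow1 by simp
  finally show False using 1 minus_one_ne_one by simp
qed

definition De :: nat where "De = DD div 2"

lemma DD_De: "DD = 2 * De + 1" unfolding De_def using DD_odd by simp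

definition bb :: 'a where "bb = - (2 * c)"
definition ll :: 'a where "ll = bb * delta"
definition rho :: 'a where "rho = g ^ (n - De)"

lemma bb_q: "bb ^ q = bb" unfolding bb_def using frob_neg frob_two cq by (simp add: power_mult_distrib)
lemma bb_ne0: "bb \<noteq> 0" unfolding bb_def using two_ne0 c0 by simp
lemma ll_q: "ll ^ q = ll" unfolding ll_def using bb_q delta_q by (simp add: power_mult_distrib)
lemma ll_ne0: "ll \<noteq> 0" unfolding ll_def using bb_ne0 delta_ne0 by simp
lemma rho_q: "rho ^ q = rho" unfolding rho_def by (rule g_frob)
lemma rho_ne0: "rho \<noteq> 0" unfolding rho_def by (rule gpow_ne0)

lemma rho_delta: "rho ^ 2 * delta = g"
proof -
  have De: "De < n" using DD DD_De by simp
  have "rho ^ 2 * delta = g ^ (2 * (n - De) + (2 * De + 1))"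
    unfolding rho_def using DD DD_De by (simp add: power_add power_mult[symmetric] mult.commute)
  also have "2 * (n - De) + (2 * De + 1) = 1 + n * 2" using De by simp
  also have "g ^ (1 + n * 2) = g" using g_n by (simp add: power_add power_mult)
  finally show ?thesis .
qed

definition ff :: "'a \<Rightarrow> 'a" where "ff x = c * (x ^ (q + 1) - x ^ 2)"

lemma ring_id: "(a::'b::comm_ring_1) * ((t - w * v) * (t + w * v) - (t + w * v) * (t + w * v)) =
   - (2 * a) * (w * w) * (v * v) + w * (- (2 * a) * t * v)"
  by (simp add: algebra_simps)

lemma fkey:
  assumes "t ^ q = t" "v ^ q = v"
  shows "ff (t + om * v) = ll * v ^ 2 + om * (bb * t * v)"
proof -
  have "(t + om * v) ^ q = t - om * v"
    using assms by (simp add: frob_add power_mult_distrib om_q)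
  then have e: "(t + om * v) ^ (q + 1) = (t - om * v) * (t + om * v)" by simp
  show ?thesis unfolding ff_def ll_def bb_def delta_def power2_eq_square e
    by (rule ring_id)
qed

lemma fK: "t ^ q = t \<Longrightarrow> ff t = 0"
  unfolding ff_def by (simp add: power2_eq_square)

end

context ffs begin

definition tt :: "nat \<Rightarrow> 'a" where "tt T = g ^ T / bb"
definition vv :: "nat \<Rightarrow> 'a" where "vv V = rho * g ^ V / bb"

lemma tt_q: "tt T ^ q = tt T" unfolding tt_def frob_div g_frob bb_q ..
lemma vv_q: "vv V ^ q = vv V" unfolding vv_def frob_div power_mult_distrib g_frob bb_q rho_q ..
lemma tt_ne0: "tt T \<noteq> 0" unfolding tt_def using gpow_ne0 bb_ne0 by simp
lemma vv_ne0: "vv V \<noteq> 0" unfolding vv_def using gpow_ne0 bb_ne0 rho_ne0 by simp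

lemma ll_vv: "ll * (vv V) ^ 2 = tt (1 + 2 * V)"
proof -
  have "ll * (vv V) ^ 2 = (rho ^ 2 * delta) * g ^ (2 * V) / bb"
    unfolding ll_def vv_def using bb_ne0
    by (simp add: power2_eq_square power_mult power_mult_distrib field_simps)
  also have "\<dots> = g ^ (1 + 2 * V) / bb" using rho_delta by simp
  finally show ?thesis unfolding tt_def .
qed

lemma bb_tt_vv: "bb * tt T * vv V = vv (T + V)"
  unfolding tt_def vv_def using bb_ne0 by (simp add: power_add field_simps)

lemma tt_mod: "tt T = tt (T mod n)" unfolding tt_def using g_mod by metis
lemma vv_mod: "vv V = vv (V mod n)" unfolding vv_def using g_mod by metis

definition EE :: "int \<times> int \<Rightarrow> 'a" where
  "EE = (\<lambda>(T, V). tt (nat T) + om * vv (nat V))"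

definition Tset :: "'a set" where "Tset = EE ` ({0..<int n} \<times> {0..<int n})"

lemma nat_mod_lin: "V \<ge> 0 \<Longrightarrow> nat ((1 + 2 * V) mod int n) = (1 + 2 * nat V) mod n"
  by (simp add: nat_mod_distrib nat_add_distrib nat_mult_distrib)

lemma nat_mod_add: "T \<ge> 0 \<Longrightarrow> V \<ge> 0 \<Longrightarrow> nat ((T + V) mod int n) = (nat T + nat V) mod n"
  by (simp add: nat_mod_distrib nat_add_distrib)

lemma EE_step:
  assumes "X \<in> {0..<int n} \<times> {0..<int n}"
  shows "EE (Amap (int n) X) = ff (EE X)"
proof -
  obtain T V where X: "X = (T, V)" "T \<ge> 0" "V \<ge> 0" using assms by auto
  have "ff (EE X) = ll * (vv (nat V)) ^ 2 + om * (bb * tt (nat T) * vv (nat V))"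
    unfolding X EE_def using fkey[OF tt_q vv_q] by simp
  also have "\<dots> = tt (1 + 2 * nat V) + om * vv (nat T + nat V)" using ll_vv bb_tt_vv by simp
  also have "\<dots> = tt ((1 + 2 * nat V) mod n) + om * vv ((nat T + nat V) mod n)"
    using tt_mod vv_mod by metis
  also have "\<dots> = EE (Amap (int n) X)"
    unfolding X Amap_def EE_def using X nat_mod_lin nat_mod_add by simp
  finally show ?thesis by simp
qed

lemma EE_inj: "inj_on EE ({0..<int n} \<times> {0..<int n})"
proof (rule inj_onI)
  fix X Y assume XY: "X \<in> {0..<int n} \<times> {0..<int n}" "Y \<in> {0..<int n} \<times> {0..<int n}" "EE X = EE Y"
  obtain T V where X: "X = (T, V)" "0 \<le> T" "T < int n" "0 \<le> V" "V < int n" using XY(1) by auto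
  obtain T' V' where Y: "Y = (T', V')" "0 \<le> T'" "T' < int n" "0 \<le> V'" "V' < int n" using XY(2) by auto
  have "tt (nat T) + om * vv (nat V) = tt (nat T') + om * vv (nat V')" using XY(3) X Y unfolding EE_def by simp
  then have e: "tt (nat T) = tt (nat T')" "vv (nat V) = vv (nat V')" using uniq[OF tt_q vv_q tt_q vv_q] by auto
  have "g ^ nat T = g ^ nat T'" using e(1) bb_ne0 unfolding tt_def by simp
  then have "nat T = nat T'" using g_inj X Y by simp
  moreover have "g ^ nat V = g ^ nat V'" using e(2) bb_ne0 rho_ne0 unfolding vv_def by simp
  then have "nat V = nat V'" using g_inj X Y by simp
  ultimately show "X = Y" using X Y eq_nat_nat_iff by auto
qed

lemma torus_iso: "fg_iso (Tset, ff) ({0..<int n} \<times> {0..<int n}, Amap (int n))"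
proof (rule fg_iso_inv[of EE])
  show "bij_betw EE ({0..<int n} \<times> {0..<int n}) Tset"
    unfolding Tset_def bij_betw_def using EE_inj by simp
  show "\<forall>w\<in>{0..<int n} \<times> {0..<int n}. Amap (int n) w \<in> {0..<int n} \<times> {0..<int n}"
    using n2 unfolding Amap_def by auto
  show "\<forall>w\<in>{0..<int n} \<times> {0..<int n}. EE (Amap (int n) w) = ff (EE w)"
    using EE_step by blast
qed

lemma Tset_ff: "x \<in> Tset \<Longrightarrow> ff x \<in> Tset"
proof -
  assume "x \<in> Tset"
  then obtain X where X: "X \<in> {0..<int n} \<times> {0..<int n}" "x = EE X" unfolding Tset_def by auto
  have "Amap (int n) X \<in> {0..<int n} \<times> {0..<int n}" using n2 unfolding Amap_def by (cases X) auto
  then show "ff x \<in> Tset" unfolding Tset_def using X EE_step by (metis image_eqI)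
qed

lemma torus_char:
  assumes "t ^ q = t" "v ^ q = v" "t \<noteq> 0" "v \<noteq> 0"
  shows "t + om * v \<in> Tset"
proof -
  have "(t * bb) ^ q = t * bb" using assms(1) bb_q by (simp add: power_mult_distrib)
  then obtain i where i: "i < n" "t * bb = g ^ i" using inK assms(3) bb_ne0 by fastforce
  have "(v * bb / rho) ^ q = v * bb / rho" using assms(2) bb_q rho_q by (simp add: power_mult_distrib frob_div)
  then obtain j where j: "j < n" "v * bb / rho = g ^ j" using inK assms(4) bb_ne0 rho_ne0 by fastforce
  have "t = tt i" unfolding tt_def using i bb_ne0 by (simp add: field_simps)
  moreover have "v = vv j" unfolding vv_def using j bb_ne0 rho_ne0 by (simp add: field_simps)
  ultimately have "t + om * v = EE (int i, int j)" unfolding EE_def by simp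
  moreover have "(int i, int j) \<in> {0..<int n} \<times> {0..<int n}" using i j by simp
  ultimately show ?thesis unfolding Tset_def by blast
qed

end

context ffs begin

definition zt :: "(bool \<times> nat \<times> bool list) option \<Rightarrow> 'a" where
  "zt z = (case z of None \<Rightarrow> 0
     | Some (False, j, bs) \<Rightarrow> ll * g ^ (2 * j + 1)
     | Some (True, j, []) \<Rightarrow> ll * g ^ (2 * j)
     | Some (True, j, b # bs) \<Rightarrow> 0)"

definition zv :: "(bool \<times> nat \<times> bool list) option \<Rightarrow> 'a" where
  "zv z = (case z of Some (True, j, b # bs) \<Rightarrow> g ^ (j + (if b then n div 2 else 0)) | _ \<Rightarrow> 0)"

definition Zh :: "(bool \<times> nat \<times> bool list) option \<Rightarrow> 'a" where
  "Zh z = zt z + om * zv z"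

lemma zt_simps [simp]:
  "zt None = 0" "zt (Some (False, j, bs)) = ll * g ^ (2 * j + 1)"
  "zt (Some (True, j, [])) = ll * g ^ (2 * j)" "zt (Some (True, j, b # bs)) = 0"
  unfolding zt_def by simp_all

lemma zv_simps [simp]:
  "zv None = 0" "zv (Some (False, j, bs)) = 0"
  "zv (Some (True, j, [])) = 0" "zv (Some (True, j, b # bs)) = g ^ (j + (if b then n div 2 else 0))"
  unfolding zv_def by simp_all

lemma zt_q: "zt z ^ q = zt z"
proof -
  have h: "(ll * g ^ i) ^ q = ll * g ^ i" for i using ll_q g_frob by (simp add: power_mult_distrib)
  show ?thesis
  proof (cases z)
    case None then show ?thesis using q3 by simp
  next
    case (Some a)
    then obtain kk j bs where a: "z = Some (kk, j, bs)" by (cases a) auto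
    show ?thesis
    proof (cases kk)
      case False then show ?thesis using a h[of "2 * j + 1"] by (simp del: power_Suc add_2_eq_Suc')
    next
      case True
      then show ?thesis using a h[of "2 * j"] q3 by (cases bs) simp_all
    qed
  qed
qed

lemma zv_q: "zv z ^ q = zv z"
  unfolding zv_def using q3 g_frob by (auto split: option.splits bool.splits list.splits)

lemma zt_zv: "zt z = 0 \<or> zv z = 0"
  unfolding zt_def zv_def by (auto split: option.splits bool.splits list.splits)

lemma qn: "(q - 1) div 2 = n div 2" unfolding n_def ..

lemma Zv_mem: "z \<in> Z_verts q \<longleftrightarrow> z = None \<or> (\<exists>j. j < n div 2 \<and> (z = Some (False, j, []) \<or> z = Some (True, j, [])
   \<or> z = Some (True, j, [False]) \<or> z = Some (True, j, [True])))"
proof -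
  have l1: "length bs < 1 \<longleftrightarrow> bs = []" for bs :: "bool list" by (cases bs) auto
  have l2: "length bs < 2 \<longleftrightarrow> bs = [] \<or> bs = [False] \<or> bs = [True]" for bs :: "bool list"
  proof (cases bs)
    case Nil then show ?thesis by simp
  next
    case (Cons b rest)
    then show ?thesis by (cases rest; cases b) auto
  qed
  show ?thesis unfolding Z_verts_def qn using l1 l2 by auto
qed

lemma Zmap_closed: "z \<in> Z_verts q \<Longrightarrow> Z_map z \<in> Z_verts q"
  unfolding Zv_mem by auto

lemma n_half: "2 * (n div 2) = n" using n_even by simp

lemma Zh_step: "z \<in> Z_verts q \<Longrightarrow> Zh (Z_map z) = ff (Zh z)"
proof -
  assume z: "z \<in> Z_verts q"
  have "ff (Zh z) = ll * (zv z) ^ 2 + om * (bb * zt z * zv z)"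
    unfolding Zh_def by (rule fkey[OF zt_q zv_q])
  also have "bb * zt z * zv z = 0" using zt_zv by auto
  finally have e: "ff (Zh z) = ll * (zv z) ^ 2" by simp
  have gg1: "(g ^ j) ^ 2 = g ^ (2 * j)" for j by (simp add: power_mult[symmetric] mult.commute)
  have gg2: "(g ^ (j + n div 2)) ^ 2 = g ^ (2 * j)" for j
  proof -
    have "(g ^ (j + n div 2)) ^ 2 = g ^ (2 * j) * g ^ (2 * (n div 2))"
      by (simp add: power_mult[symmetric] power_add[symmetric] algebra_simps)
    then show ?thesis using n_half g_n by simp
  qed
  have gg3: "g ^ (2 * j + 2 * (n div 2)) = g ^ (2 * j)" for j
    using n_half g_n by (simp add: power_add)
  have "Zh (Z_map z) = ll * (zv z) ^ 2"
    using z unfolding Zv_mem Zh_def by (auto simp: gg1 gg2 gg3)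
  then show ?thesis using e by simp
qed

end

context ffs begin

lemma card_Tset: "card Tset = n * n"
  unfolding Tset_def using EE_inj by (simp add: card_image card_cartesian_product)

lemma card_compl: "card (UNIV - Tset) = 2 * n + 1"
proof -
  have "card (UNIV - Tset) = card (UNIV :: 'a set) - card Tset" by (simp add: card_Diff_subset)
  also have "\<dots> = (n + 1) * (n + 1) - n * n" using card card_Tset n_eq by (simp add: power2_eq_square)
  also have "\<dots> = 2 * n + 1" by (simp add: algebra_simps)
  finally show ?thesis .
qed

lemma card_Zv: "card (Z_verts q) = 2 * n + 1"
proof -
  define h where "h = n div 2"
  have nh: "n = 2 * h" unfolding h_def using n_even by simp
  have qh: "(q - 1) div 2 = h" unfolding h_def n_def ..
  define A where "A = (\<lambda>j. Some (False, j, [] :: bool list)) ` {0..<h}"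
  define B where "B = (\<lambda>(j, bs). Some (True, j, bs)) ` ({0..<h} \<times> {bs :: bool list. length bs < 2})"
  have l1: "length bs < 1 \<longleftrightarrow> bs = []" for bs :: "bool list" by (cases bs) auto
  have ZA: "Z_verts q = insert None (A \<union> B)"
    unfolding Z_verts_def qh A_def B_def using l1 by auto
  have fin2: "finite {bs :: bool list. length bs < 2}"
    using finite_lists_length_le[of "UNIV :: bool set" 2] by (rule finite_subset[rotated]) auto
  have cA: "card A = h" unfolding A_def by (subst card_image) (auto simp: inj_on_def)
  have cB: "card B = h * 3" unfolding B_def
    by (subst card_image) (auto simp: inj_on_def card_cartesian_product card_bool_lists_less)
  have "card (A \<union> B) = card A + card B"
    by (rule card_Un_disjoint) (auto simp: A_def B_def fin2)
  moreover have "None \<notin> A \<union> B" unfolding A_def B_def by auto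
  moreover have "finite (A \<union> B)" unfolding A_def B_def using fin2 by auto
  ultimately have "card (Z_verts q) = Suc (h + h * 3)" unfolding ZA using cA cB by simp
  then show ?thesis using nh by simp
qed

lemma Zh_notT: "Zh z \<notin> Tset"
proof
  assume "Zh z \<in> Tset"
  then obtain T V where "Zh z = tt T + om * vv V" unfolding Tset_def EE_def by auto
  then have "zt z = tt T \<and> zv z = vv V" unfolding Zh_def using uniq[OF zt_q zv_q tt_q vv_q] by blast
  then show False using zt_zv tt_ne0 vv_ne0 by metis
qed

lemma Zh_surj: "x \<notin> Tset \<Longrightarrow> x \<in> Zh ` Z_verts q"
proof -
  assume xT: "x \<notin> Tset"
  obtain t v where tv: "t ^ q = t" "v ^ q = v" "x = t + om * v" using decomp by blast
  have or: "t = 0 \<or> v = 0" using torus_char[OF tv(1,2)] xT tv(3) by blast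
  have qh: "(q - 1) div 2 = n div 2" unfolding n_def ..
  show ?thesis
  proof (cases "v = 0")
    case True
    show ?thesis
    proof (cases "t = 0")
      case True
      then have "x = Zh None" using tv \<open>v = 0\<close> unfolding Zh_def by simp
      moreover have "None \<in> Z_verts q" unfolding Z_verts_def by simp
      ultimately show ?thesis by blast
    next
      case False
      have "(t / ll) ^ q = t / ll" using tv(1) ll_q by (simp add: frob_div)
      then obtain i where i: "i < n" "t / ll = g ^ i" using inK False ll_ne0 by fastforce
      have t: "t = ll * g ^ i" using i ll_ne0 by (simp add: field_simps)
      show ?thesis
      proof (cases "even i")
        case True
        then obtain j where j: "i = 2 * j" by (rule evenE)
        have "2 * j < n" using i j by simp
        moreover obtain hh where "n = 2 * hh" using n_even by (rule evenE)
        ultimately have "j < n div 2" by simp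
        then have "Some (True, j, []) \<in> Z_verts q" unfolding Z_verts_def qh by auto
        moreover have "x = Zh (Some (True, j, []))" using tv \<open>v = 0\<close> t j unfolding Zh_def by simp
        ultimately show ?thesis by blast
      next
        case False
        then obtain j where j: "i = 2 * j + 1" by (rule oddE)
        have "j < n div 2" using i j n_even by presburger
        then have "Some (False, j, []) \<in> Z_verts q" unfolding Z_verts_def qh by auto
        moreover have "x = Zh (Some (False, j, []))" using tv \<open>v = 0\<close> t j unfolding Zh_def by simp
        ultimately show ?thesis by blast
      qed
    qed
  next
    case False
    then have t0: "t = 0" using or by simp
    obtain i where i: "i < n" "v = g ^ i" using inK[OF tv(2) False] by blast
    show ?thesis
    proof (cases "i < n div 2")
      case True
      then have "Some (True, i, [False]) \<in> Z_verts q" unfolding Z_verts_def qh by auto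
      moreover have "x = Zh (Some (True, i, [False]))" using tv t0 i unfolding Zh_def by simp
      ultimately show ?thesis by blast
    next
      case False
      define j where "j = i - n div 2"
      have j: "j < n div 2" "i = j + n div 2" using i False n_even unfolding j_def by auto
      then have "Some (True, j, [True]) \<in> Z_verts q" unfolding Z_verts_def qh by auto
      moreover have "x = Zh (Some (True, j, [True]))" using tv t0 i j unfolding Zh_def by simp
      ultimately show ?thesis by blast
    qed
  qed
qed

lemma Zset_eq: "Zh ` Z_verts q = UNIV - Tset"
  using Zh_notT Zh_surj by blast

lemma Zh_inj: "inj_on Zh (Z_verts q)"
proof (rule eq_card_imp_inj_on)
  have "card (Z_verts q) > 0" using card_Zv by simp
  then show "finite (Z_verts q)" by (simp add: card_gt_0_iff)
  show "card (Zh ` Z_verts q) = card (Z_verts q)" unfolding Zset_eq card_compl card_Zv ..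
qed

lemma Z_iso: "fg_iso (Zh ` Z_verts q, ff) (Z_verts q, Z_map)"
proof (rule fg_iso_inv[of Zh])
  show "bij_betw Zh (Z_verts q) (Zh ` Z_verts q)" using Zh_inj by (simp add: bij_betw_def)
  show "\<forall>w\<in>Z_verts q. Z_map w \<in> Z_verts q" using Zmap_closed by blast
  show "\<forall>w\<in>Z_verts q. Zh (Z_map w) = ff (Zh w)" using Zh_step by blast
qed

end

context ffs begin

lemma main: "fg_iso (UNIV :: 'a set, \<lambda>x. c * (x ^ (q + 1) - x ^ 2)) (target_verts q r s, target_map)"
proof -
  have ffe: "(\<lambda>x. c * (x ^ (q + 1) - x ^ 2)) = ff" by (rule ext) (simp add: ff_def)
  have P: "fg_iso ({0..<int n} \<times> {0..<int n}, Amap (int n))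
     ({(d, j, x) | d j x. d dvd r \<and> j < totient d * n div (2 * ord (3 * d) 4)
          \<and> x \<in> cyc_tree_verts (cyc_len d) s},
      \<lambda>(d, j, x). (d, j, cyc_tree_map (cyc_len d) x))"
    using partII[OF s1 rodd] unfolding n_sr[symmetric] .
  have T2: "fg_iso (Tset, ff)
     ({(d, j, x) | d j x. d dvd r \<and> j < mult_d q d \<and> x \<in> cyc_tree_verts (cyc_len d) s},
      \<lambda>(d, j, x). (d, j, cyc_tree_map (cyc_len d) x))"
    unfolding mult_d_def n_def[symmetric] by (rule fg_iso_trans[OF torus_iso P])
  have km: "\<forall>w. target_map (Inr w) = Inr ((\<lambda>(d, j, x). (d, j, cyc_tree_map (cyc_len d) x)) w)"
  proof
    fix w :: "nat \<times> nat \<times> nat \<times> bool list option"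
    obtain d j x where "w = (d, j, x)" by (cases w) auto
    then show "target_map (Inr w) = Inr ((\<lambda>(d, j, x). (d, j, cyc_tree_map (cyc_len d) x)) w)" by simp
  qed
  have "fg_iso (UNIV, ff) (Inl ` Z_verts q \<union> Inr ` {(d, j, x) | d j x. d dvd r \<and> j < mult_d q d \<and> x \<in> cyc_tree_verts (cyc_len d) s}, target_map)"
  proof (rule fg_iso_sum[OF _ _ _ _ Z_iso T2])
    show "Zh ` Z_verts q \<inter> Tset = {}" using Zset_eq by blast
    show "UNIV = Zh ` Z_verts q \<union> Tset" using Zset_eq by blast
    show "\<forall>x\<in>Zh ` Z_verts q. ff x \<in> Zh ` Z_verts q"
    proof
      fix x assume "x \<in> Zh ` Z_verts q"
      then obtain z where z: "z \<in> Z_verts q" "x = Zh z" by blast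
      then have "ff x = Zh (Z_map z)" using Zh_step by simp
      moreover have "Z_map z \<in> Z_verts q" using Zmap_closed z(1) by blast
      ultimately show "ff x \<in> Zh ` Z_verts q" by blast
    qed
    show "\<forall>x\<in>Tset. ff x \<in> Tset" using Tset_ff by blast
    show "\<forall>w. target_map (Inl w) = Inl (Z_map w)" by simp
    show "\<forall>w. target_map (Inr w) = Inr ((\<lambda>(d, j, x). (d, j, cyc_tree_map (cyc_len d) x)) w)" by (rule km)
  qed
  then show ?thesis unfolding ffe target_verts_def .
qed

end

theorem theorem13:
  fixes c :: "'a :: {field, finite}" and p k q s r :: nat
  assumes "prime p" and "odd p" and "k \<ge> 1" and "q = p ^ k"
    and "card (UNIV :: 'a set) = q ^ 2"
    and "q - 1 = 2 ^ s * r" and "odd r"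
    and "c ^ q = c" and "c \<noteq> 0"
  shows "fg_iso (UNIV :: 'a set, \<lambda>x. c * (x ^ (q + 1) - x ^ 2))
                (target_verts q r s, target_map)"
proof -
  interpret ffs c p k q s r using assms by unfold_locales
  show ?thesis by (rule main)
qed

end
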